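(* Let $D>0$, $a\in\mathbb{R}$, $g>0$, $r_{\rm g}>0$, $l_{\rm c}>0$, $c_\infty>0$, $\tilde a,\beta\in\mathbb{R}$, $l_{\rm s}>0$, $\gamma>0$ with $\gamma\ge a/D$, $\bar l>l_{\rm s}$, and $\bar v=\min\{\frac{g}{4\gamma},\frac{D}{8\bar l}\}$. Let $A,B,C,K,\phi,k,F,P,Q$ be as in the context, and consider a solution $(w(\cdot,t),X(t))$, $X=[z_1\ z_2]^\top$, $l(t)=l_{\rm s}+z_2(t)$, of the target system $$w_t=Dw_{xx}-aw_x-gw-\dot l(t)F(x,X(t)),\quad 0<x<l(t),$$ $$w_x(0,t)=\gamma w(0,t),\quad w(l(t),t)=0,\quad \dot X=(A+BK^\top)X+Bw_x(l(t),t),$$ with Lyapunov function $$V=\frac{d_1}{2}\int_0^{l(t)}w^2dx+\frac12\int_0^{l(t)}w_x^2dx+\frac{\gamma}{2}w(0,t)^2+d_2X^\top PX,$$ where $d_1>0$ is sufficiently large and $d_2>0$ sufficiently small, and let $\alpha=\min\{2g+\frac{D}{4\bar l},\frac{4g+d_1D}{2},\frac{\lambda_{\min}(Q)}{2\lambda_{\max}(P)},\frac{d_2(2d_1D+g)}{4}\}$. Then there exists $M>0$ such that if $V(0)<M$, then $0<l(t)\le\bar l$ and $|\dot l(t)|\le\bar v$ for all $t\ge0$, and $V(t)\le V(0)\exp(-\frac{\alpha}{2}t)$ for all $t\ge0$.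
   Context: $A=\begin{bmatrix}\tilde a&0\\ r_{\rm g}&0\end{bmatrix}$, $B=[-\beta\ \ 0]^\top$, $C=[1\ \ -\frac{(a-gl_{\rm c})c_\infty}{D}]^\top$; $K\in\mathbb{R}^2$ is chosen so that $A+BK^\top$ is Hurwitz. $N_1=\begin{bmatrix}0&\frac1D(gI+A+\frac aD BC^\top)\\ I&\frac1D(BC^\top+aI)\end{bmatrix}$, $\phi(x)^\top=[C^\top\ \ K^\top-\frac1D C^\top BC^\top]e^{N_1x}\begin{bmatrix}I\\0\end{bmatrix}$, $k(x,y)=-\frac1D\phi(x-y)^\top B$, $F(x,X)=(\phi'(x-l(t))^\top-k(x,l(t))C^\top)X$. $P,Q$ are positive definite with $(A+BK^\top)^\top P+P(A+BK^\top)=-Q$; $\lambda_{\min},\lambda_{\max}$ denote smallest/largest eigenvalues. Note $\dot l(t)=r_{\rm g}z_1(t)$. The model is the backstepping target system for the error dynamics of tubulin concentration in a growing axon. *)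

theory Defs
  imports "HOL-Analysis.Analysis"
begin

primrec mpow :: "real^'n^'n \<Rightarrow> nat \<Rightarrow> real^'n^'n" where
  "mpow M 0 = mat 1"
| "mpow M (Suc k) = M ** mpow M k"

definition mexp :: "real^'n^'n \<Rightarrow> real^'n^'n" where
  "mexp M = (\<Sum>k. (1 / fact k) *\<^sub>R mpow M k)"

definition hurwitz :: "real^'n^'n \<Rightarrow> bool" where
  "hurwitz M \<longleftrightarrow> (\<forall>\<mu>::complex.
      det (mat \<mu> - (\<chi> i j. complex_of_real (M $ i $ j))) = 0 \<longrightarrow> Re \<mu> < 0)"

definition pos_def :: "real^'n^'n \<Rightarrow> bool" where
  "pos_def M \<longleftrightarrow> transpose M = M \<and> (\<forall>x. x \<noteq> 0 \<longrightarrow> x \<bullet> (M *v x) > 0)"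

definition real_eigenvalues :: "real^'n^'n \<Rightarrow> real set" where
  "real_eigenvalues M = {\<mu>. \<exists>v. v \<noteq> 0 \<and> M *v v = \<mu> *\<^sub>R v}"

definition lambda_min :: "real^'n^'n \<Rightarrow> real" where
  "lambda_min M = Min (real_eigenvalues M)"

definition lambda_max :: "real^'n^'n \<Rightarrow> real" where
  "lambda_max M = Max (real_eigenvalues M)"

definition outer :: "real^'n \<Rightarrow> real^'m \<Rightarrow> real^'m^'n" where
  "outer u v = (\<chi> i j. u $ i * v $ j)"

definition matA :: "real \<Rightarrow> real \<Rightarrow> real^2^2" where
  "matA atl rg = vector [vector [atl, 0], vector [rg, 0]]"

definition vecB :: "real \<Rightarrow> real^2" where
  "vecB \<beta> = vector [- \<beta>, 0]"

definition vecC :: "real \<Rightarrow> real \<Rightarrow> real \<Rightarrow> real \<Rightarrow> real \<Rightarrow> real^2" where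
  "vecC a g lc cinf D = vector [1, - ((a - g * lc) * cinf / D)]"

definition blockmat :: "real^2^2 \<Rightarrow> real^2^2 \<Rightarrow> real^2^2 \<Rightarrow> real^2^2 \<Rightarrow> real^(2+2)^(2+2)" where
  "blockmat M11 M12 M21 M22 = (\<chi> i j. case (i, j) of
       (Inl p, Inl q) \<Rightarrow> M11 $ p $ q
     | (Inl p, Inr q) \<Rightarrow> M12 $ p $ q
     | (Inr p, Inl q) \<Rightarrow> M21 $ p $ q
     | (Inr p, Inr q) \<Rightarrow> M22 $ p $ q)"

definition matN1 :: "real \<Rightarrow> real \<Rightarrow> real \<Rightarrow> real^2^2 \<Rightarrow> real^2 \<Rightarrow> real^2 \<Rightarrow> real^(2+2)^(2+2)" where
  "matN1 D a g A B C = blockmat 0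
       ((1 / D) *\<^sub>R (mat g + A + (a / D) *\<^sub>R outer B C))
       (mat 1)
       ((1 / D) *\<^sub>R (outer B C + mat a))"

text \<open>phi(x)^T = [C^T, K^T - (1/D) C^T B C^T] e^{N_1 x} [I; 0].\<close>
definition phi :: "real \<Rightarrow> real \<Rightarrow> real \<Rightarrow> real^2^2 \<Rightarrow> real^2 \<Rightarrow> real^2 \<Rightarrow> real^2 \<Rightarrow> real \<Rightarrow> real^2" where
  "phi D a g A B C K x =
     (let r = (\<chi> i. case i of Inl p \<Rightarrow> C $ p
                       | Inr p \<Rightarrow> (K - (1 / D) *\<^sub>R ((C \<bullet> B) *\<^sub>R C)) $ p) :: real^(2+2);
          E = (\<chi> i j. case i of Inl p \<Rightarrow> (mat 1 :: real^2^2) $ p $ j | Inr p \<Rightarrow> 0) :: real^2^(2+2)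
      in r v* (mexp (x *\<^sub>R matN1 D a g A B C) ** E))"

definition kker :: "real \<Rightarrow> real \<Rightarrow> real \<Rightarrow> real^2^2 \<Rightarrow> real^2 \<Rightarrow> real^2 \<Rightarrow> real^2 \<Rightarrow> real \<Rightarrow> real \<Rightarrow> real" where
  "kker D a g A B C K x y = - (1 / D) * (phi D a g A B C K (x - y) \<bullet> B)"

text \<open>F(x,X) = (phi'(x - l)^T - k(x,l) C^T) X, with l the current interface position.\<close>
definition Fterm :: "real \<Rightarrow> real \<Rightarrow> real \<Rightarrow> real^2^2 \<Rightarrow> real^2 \<Rightarrow> real^2 \<Rightarrow> real^2 \<Rightarrow> real \<Rightarrow> real \<Rightarrow> real^2 \<Rightarrow> real" where
  "Fterm D a g A B C K l x X =
     (vector_derivative (phi D a g A B C K) (at (x - l)) - kker D a g A B C K x l *\<^sub>R C) \<bullet> X"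

definition dom_cl :: "real \<Rightarrow> (real \<Rightarrow> real) \<Rightarrow> (real \<times> real) set" where
  "dom_cl ls z2 = {(x, t). 0 \<le> t \<and> 0 \<le> x \<and> x \<le> ls + z2 t}"

definition target_solution ::
  "real \<Rightarrow> real \<Rightarrow> real \<Rightarrow> real \<Rightarrow> real \<Rightarrow> real \<Rightarrow> real^2^2 \<Rightarrow> real^2 \<Rightarrow> real^2 \<Rightarrow> real^2 \<Rightarrow>
   (real \<Rightarrow> real \<Rightarrow> real) \<Rightarrow> (real \<Rightarrow> real \<Rightarrow> real) \<Rightarrow> (real \<Rightarrow> real \<Rightarrow> real) \<Rightarrow>
   (real \<Rightarrow> real \<Rightarrow> real) \<Rightarrow> (real \<Rightarrow> real \<Rightarrow> real) \<Rightarrow> (real \<Rightarrow> real) \<Rightarrow> (real \<Rightarrow> real) \<Rightarrow> bool" where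
  "target_solution D a g rg ls \<gamma> A B C K w wx wxx wt wxt z1 z2 \<longleftrightarrow>
     (let l = (\<lambda>t. ls + z2 t); X = (\<lambda>t. vector [z1 t, z2 t] :: real^2);
          \<Omega> = dom_cl ls z2 in
     \<comment> \<open>regularity: w in C^{2,1} with w_xt, on the closed moving domain\<close>
     continuous_on \<Omega> (\<lambda>(x, t). w x t) \<and> continuous_on \<Omega> (\<lambda>(x, t). wx x t) \<and>
     continuous_on \<Omega> (\<lambda>(x, t). wxx x t) \<and> continuous_on \<Omega> (\<lambda>(x, t). wt x t) \<and>
     continuous_on \<Omega> (\<lambda>(x, t). wxt x t) \<and>
     (\<forall>(x, t) \<in> \<Omega>.
        ((\<lambda>y. w y t) has_real_derivative wx x t) (at x within {0 .. l t}) \<and>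
        ((\<lambda>y. wx y t) has_real_derivative wxx x t) (at x within {0 .. l t}) \<and>
        ((\<lambda>s. w x s) has_real_derivative wt x t) (at t within {s. 0 \<le> s \<and> x \<le> l s}) \<and>
        ((\<lambda>s. wx x s) has_real_derivative wxt x t) (at t within {s. 0 \<le> s \<and> x \<le> l s})) \<and>
     \<comment> \<open>PDE, with \<open>l'(t) = r_g z_1(t)\<close>\<close>
     (\<forall>t \<ge> 0. \<forall>x. 0 < x \<and> x < l t \<longrightarrow>
        wt x t = D * wxx x t - a * wx x t - g * w x t
                 - rg * z1 t * Fterm D a g A B C K (l t) x (X t)) \<and>
     \<comment> \<open>boundary conditions\<close>
     (\<forall>t \<ge> 0. wx 0 t = \<gamma> * w 0 t \<and> w (l t) t = 0) \<and>
     \<comment> \<open>ODE\<close>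
     (\<forall>t \<ge> 0. (X has_vector_derivative
         ((A + outer B K) *v X t + wx (l t) t *\<^sub>R B)) (at t within {0..})))"

definition lyapV ::
  "real \<Rightarrow> real \<Rightarrow> real \<Rightarrow> real \<Rightarrow> real^2^2 \<Rightarrow>
   (real \<Rightarrow> real \<Rightarrow> real) \<Rightarrow> (real \<Rightarrow> real \<Rightarrow> real) \<Rightarrow> (real \<Rightarrow> real) \<Rightarrow> (real \<Rightarrow> real) \<Rightarrow> real \<Rightarrow> real" where
  "lyapV ls \<gamma> d1 d2 P w wx z1 z2 t =
     (let l = ls + z2 t; X = vector [z1 t, z2 t] :: real^2 in
       d1 / 2 * integral {0 .. l} (\<lambda>x. (w x t)\<^sup>2)
       + 1 / 2 * integral {0 .. l} (\<lambda>x. (wx x t)\<^sup>2)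
       + \<gamma> / 2 * (w 0 t)\<^sup>2
       + d2 * (X \<bullet> (P *v X)))"

end

theory Submission
  imports Defs
begin

definition absum :: "real^'n^'m \<Rightarrow> real" where
  "absum M = (\<Sum>i\<in>UNIV. \<Sum>j\<in>UNIV. \<bar>M$i$j\<bar>)"

lemma absum_nonneg: "0 \<le> absum M"
  unfolding absum_def by (intro sum_nonneg) auto

lemma entry_le_absum: "\<bar>M$i$j\<bar> \<le> absum M"
proof -
  have "\<bar>M$i$j\<bar> \<le> (\<Sum>j\<in>UNIV. \<bar>M$i$j\<bar>)"
    by (rule member_le_sum) auto
  also have "\<dots> \<le> absum M" unfolding absum_def
    by (rule member_le_sum[where f="\<lambda>i. \<Sum>j\<in>UNIV. \<bar>M$i$j\<bar>"]) (auto intro: sum_nonneg)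
  finally show ?thesis .
qed

lemma norm_le_absum: "norm M \<le> absum M"
proof -
  have "norm M \<le> (\<Sum>i\<in>UNIV. \<bar>norm (M$i)\<bar>)"
    unfolding norm_vec_def by (simp add: L2_set_le_sum)
  also have "\<dots> \<le> (\<Sum>i\<in>UNIV. \<Sum>j\<in>UNIV. \<bar>M$i$j\<bar>)"
    by (intro sum_mono) (simp add: norm_le_l1_cart)
  finally show ?thesis unfolding absum_def .
qed

lemma absum_mult: "absum ((M::real^'n^'m) ** (N::real^'p^'n)) \<le> absum M * absum N"
proof -
  have "absum (M ** N) = (\<Sum>i\<in>UNIV. \<Sum>j\<in>UNIV. \<bar>\<Sum>k\<in>UNIV. M$i$k * N$k$j\<bar>)"
    unfolding absum_def matrix_matrix_mult_def by simp
  also have "\<dots> \<le> (\<Sum>i\<in>UNIV. \<Sum>j\<in>UNIV. \<Sum>k\<in>UNIV. \<bar>M$i$k\<bar> * \<bar>N$k$j\<bar>)"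
    by (intro sum_mono) (subst abs_mult[symmetric], rule sum_abs)
  also have "\<dots> = (\<Sum>i\<in>UNIV. \<Sum>k\<in>UNIV. \<bar>M$i$k\<bar> * (\<Sum>j\<in>UNIV. \<bar>N$k$j\<bar>))"
    by (simp add: sum_distrib_left, subst sum.swap, rule refl)
  also have "\<dots> \<le> (\<Sum>i\<in>UNIV. \<Sum>k\<in>UNIV. \<bar>M$i$k\<bar> * absum N)"
  proof (intro sum_mono mult_left_mono)
    fix k show "(\<Sum>j\<in>UNIV. \<bar>N$k$j\<bar>) \<le> absum N" unfolding absum_def
      by (rule member_le_sum[where f="\<lambda>i. \<Sum>j\<in>UNIV. \<bar>N$i$j\<bar>"]) (auto intro: sum_nonneg)
  qed auto
  also have "\<dots> = absum M * absum N"
    unfolding absum_def by (simp add: sum_distrib_right)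
  finally show ?thesis .
qed

lemma mpow_absum: "absum (mpow M k) \<le> absum (mat 1 :: real^'n^'n) * absum (M::real^'n^'n) ^ k"
proof (induction k)
  case 0 then show ?case by simp
next
  case (Suc k)
  have "absum (mpow M (Suc k)) \<le> absum M * absum (mpow M k)"
    by (simp add: absum_mult)
  also have "\<dots> \<le> absum M * (absum (mat 1 :: real^'n^'n) * absum M ^ k)"
    by (rule mult_left_mono[OF Suc absum_nonneg])
  finally show ?case by (simp add: algebra_simps)
qed

lemma scaleR_mmult: "(s *\<^sub>R (M::real^'n^'m)) ** (N::real^'p^'n) = s *\<^sub>R (M ** N)"
  by (simp add: matrix_matrix_mult_def vec_eq_iff sum_distrib_left algebra_simps)

lemma mmult_scaleR: "(M::real^'n^'m) ** (s *\<^sub>R (N::real^'p^'n)) = s *\<^sub>R (M ** N)"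
  by (simp add: matrix_matrix_mult_def vec_eq_iff sum_distrib_left algebra_simps)

lemma mpow_scale: "mpow (s *\<^sub>R M) k = s^k *\<^sub>R mpow M k"
  by (induction k) (auto simp: scaleR_mmult mmult_scaleR)

lemma mexp_coef_summable:
  fixes N :: "real^'n^'n"
  shows "summable (\<lambda>k. (mpow N k $ i $ j / fact k) * y^k)"
proof (rule summable_comparison_test)
  let ?n0 = "absum (mat 1 :: real^'n^'n)"
  show "summable (\<lambda>k. ?n0 * (inverse (fact k) * (absum N * \<bar>y\<bar>)^k))"
    by (intro summable_mult summable_exp)
  show "\<exists>N0. \<forall>k\<ge>N0. norm (mpow N k $ i $ j / fact k * y ^ k)
      \<le> ?n0 * (inverse (fact k) * (absum N * \<bar>y\<bar>) ^ k)"
  proof (intro exI allI impI)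
    fix k :: nat
    have "\<bar>mpow N k $ i $ j\<bar> \<le> ?n0 * absum N ^ k"
      using entry_le_absum[of "mpow N k" i j] mpow_absum[of N k] by linarith
    then have "\<bar>mpow N k $ i $ j\<bar> * \<bar>y\<bar>^k / fact k \<le> ?n0 * absum N ^ k * \<bar>y\<bar>^k / fact k"
      by (intro divide_right_mono mult_right_mono) auto
    then show "norm (mpow N k $ i $ j / fact k * y ^ k)
      \<le> ?n0 * (inverse (fact k) * (absum N * \<bar>y\<bar>) ^ k)"
    proof -
      have e1: "norm (mpow N k $ i $ j / fact k * y ^ k) = \<bar>mpow N k $ i $ j\<bar> * \<bar>y\<bar>^k / fact k"
        by (simp add: abs_mult power_abs)
      have e2: "?n0 * (inverse (fact k) * (absum N * \<bar>y\<bar>) ^ k) = ?n0 * absum N ^ k * \<bar>y\<bar>^k / fact k"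
        by (simp add: power_mult_distrib divide_inverse mult_ac)
      show ?thesis unfolding e1 e2 by fact
    qed
  qed
qed

lemma mexp_series_summable:
  fixes N :: "real^'n^'n"
  shows "summable (\<lambda>k. (1 / fact k) *\<^sub>R mpow (s *\<^sub>R N) k)"
proof (rule summable_comparison_test)
  let ?n0 = "absum (mat 1 :: real^'n^'n)"
  show "summable (\<lambda>k. ?n0 * (inverse (fact k) * (absum N * \<bar>s\<bar>)^k))"
    by (intro summable_mult summable_exp)
  show "\<exists>N0. \<forall>k\<ge>N0. norm ((1 / fact k) *\<^sub>R mpow (s *\<^sub>R N) k)
      \<le> ?n0 * (inverse (fact k) * (absum N * \<bar>s\<bar>) ^ k)"
  proof (intro exI allI impI)
    fix k :: nat
    have "norm ((1 / fact k) *\<^sub>R mpow (s *\<^sub>R N) k) = (\<bar>s\<bar>^k / fact k) * norm (mpow N k)"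
      unfolding mpow_scale scaleR_scaleR norm_scaleR abs_mult power_abs by simp
    also have "\<dots> \<le> (\<bar>s\<bar>^k / fact k) * (?n0 * absum N ^ k)"
      using norm_le_absum[of "mpow N k"] mpow_absum[of N k]
      by (intro mult_left_mono) auto
    also have "\<dots> = ?n0 * (inverse (fact k) * (absum N * \<bar>s\<bar>) ^ k)"
      by (simp add: power_mult_distrib divide_inverse mult_ac)
    finally show "norm ((1 / fact k) *\<^sub>R mpow (s *\<^sub>R N) k)
      \<le> ?n0 * (inverse (fact k) * (absum N * \<bar>s\<bar>) ^ k)" .
  qed
qed

lemma bounded_linear_entry: "bounded_linear (\<lambda>M::real^'n^'m. M $ i $ j)"
  by (rule bounded_linear_compose[OF bounded_linear_vec_nth bounded_linear_vec_nth])

lemma mexp_entry: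
  fixes N :: "real^'n^'n"
  shows "mexp (s *\<^sub>R N) $ i $ j = (\<Sum>k. (mpow N k $ i $ j / fact k) * s^k)"
proof -
  have "mexp (s *\<^sub>R N) $ i $ j = (\<Sum>k. ((1 / fact k) *\<^sub>R mpow (s *\<^sub>R N) k) $ i $ j)"
    unfolding mexp_def by (rule bounded_linear.suminf[OF bounded_linear_entry mexp_series_summable])
  also have "\<dots> = (\<Sum>k. (mpow N k $ i $ j / fact k) * s^k)"
    by (simp add: mpow_scale mult.commute)
  finally show ?thesis .
qed

definition ec :: "real^'n^'n \<Rightarrow> 'n \<Rightarrow> 'n \<Rightarrow> real \<Rightarrow> real" where
  "ec N i j s = (\<Sum>k. (mpow N k $ i $ j / fact k) * s^k)"

definition ec' :: "real^'n^'n \<Rightarrow> 'n \<Rightarrow> 'n \<Rightarrow> real \<Rightarrow> real" where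
  "ec' N i j s = (\<Sum>k. diffs (\<lambda>k. mpow N k $ i $ j / fact k) k * s^k)"

lemma ec_deriv: "(ec N i j has_field_derivative ec' N i j s) (at s)"
  unfolding ec_def ec'_def
  by (rule termdiffs_strong_converges_everywhere[OF mexp_coef_summable])

lemma ec'_cont: "isCont (ec' N i j) s"
  unfolding ec'_def
  by (rule isCont_powser_converges_everywhere[OF termdiff_converges_all[OF mexp_coef_summable]])

lemma phi_gen_C1:
  fixes N :: "real^'n^'n" and r :: "real^'n" and E :: "real^'p^'n"
  defines "\<Phi>' \<equiv> \<lambda>s. (\<chi> m. \<Sum>i\<in>UNIV. \<Sum>q\<in>UNIV. r$i * E$q$m * ec' N i q s)"
  shows "((\<lambda>s. r v* (mexp (s *\<^sub>R N) ** E)) has_vector_derivative \<Phi>' s) (at s)"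
    and "continuous_on UNIV \<Phi>'"
proof -
  have comp: "(r v* (mexp (s *\<^sub>R N) ** E)) $ m = (\<Sum>i\<in>UNIV. \<Sum>q\<in>UNIV. r$i * E$q$m * ec N i q s)" for s m
    by (simp add: vector_matrix_mult_def matrix_matrix_mult_def mexp_entry ec_def sum_distrib_left mult_ac)
  show "((\<lambda>s. r v* (mexp (s *\<^sub>R N) ** E)) has_vector_derivative \<Phi>' s) (at s)"
    unfolding has_vector_derivative_def
  proof (subst has_derivative_componentwise_within, intro ballI)
    fix b :: "real^'p" assume "b \<in> Basis"
    then obtain m where b: "b = axis m 1" unfolding Basis_vec_def by auto
    have "((\<lambda>s. \<Sum>i\<in>UNIV. \<Sum>q\<in>UNIV. r$i * E$q$m * ec N i q s) has_field_derivative
           (\<Sum>i\<in>UNIV. \<Sum>q\<in>UNIV. r$i * E$q$m * ec' N i q s)) (at s)"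
      by (intro DERIV_sum DERIV_cmult ec_deriv)
    then show "((\<lambda>s. (r v* (mexp (s *\<^sub>R N) ** E)) \<bullet> b) has_derivative (\<lambda>h. (h *\<^sub>R \<Phi>' s) \<bullet> b)) (at s)"
      unfolding b inner_axis comp \<Phi>'_def has_field_derivative_def
      by (simp add: mult.commute) (erule has_derivative_eq_rhs, simp add: fun_eq_iff mult.commute)
  qed
  show "continuous_on UNIV \<Phi>'"
    unfolding \<Phi>'_def
    by (intro continuous_on_vec_lambda continuous_on_sum continuous_on_mult continuous_on_const)
       (simp add: continuous_at_imp_continuous_on ec'_cont)
qed

lemma phi_C1:
  obtains \<Phi>' where "\<And>s. (phi D a g A B C K has_vector_derivative \<Phi>' s) (at s)"
    and "continuous_on UNIV \<Phi>'"
proof -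
  have eq: "phi D a g A B C K = (\<lambda>s. (\<chi> i. case i of Inl p \<Rightarrow> C $ p
                       | Inr p \<Rightarrow> (K - (1 / D) *\<^sub>R ((C \<bullet> B) *\<^sub>R C)) $ p) v*
        (mexp (s *\<^sub>R matN1 D a g A B C) **
         ((\<chi> i j. case i of Inl p \<Rightarrow> (mat 1 :: real^2^2) $ p $ j | Inr p \<Rightarrow> 0) :: real^2^(2+2))))"
    by (rule ext) (simp only: phi_def Let_def)
  show ?thesis
    apply (rule that)
     apply (unfold eq)
     apply (rule phi_gen_C1(1))
    apply (rule phi_gen_C1(2))
    done
qed

lemma Fterm_bound:
  obtains CF where "CF \<ge> 0" and
    "\<And>L x X. 0 \<le> x \<Longrightarrow> x \<le> L \<Longrightarrow> L \<le> lbar \<Longrightarrow>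
       \<bar>Fterm D a g A B C K L x X\<bar> \<le> CF * norm X"
proof -
  obtain \<Phi>' where d: "\<And>s. (phi D a g A B C K has_vector_derivative \<Phi>' s) (at s)"
    and c: "continuous_on UNIV \<Phi>'"
    using phi_C1 by blast
  have cphi: "continuous_on UNIV (phi D a g A B C K)"
    using d by (meson continuous_at_imp_continuous_on has_vector_derivative_continuous)
  have "bounded (\<Phi>' ` {-lbar..0})"
    by (intro compact_imp_bounded compact_continuous_image continuous_on_subset[OF c]) auto
  then obtain B1 where B1': "\<forall>s\<in>{-lbar..0}. norm (\<Phi>' s) \<le> B1"
    unfolding bounded_iff by auto
  then have B1: "\<And>s. s \<in> {-lbar..0} \<Longrightarrow> norm (\<Phi>' s) \<le> B1" by blast
  have "bounded (phi D a g A B C K ` {-lbar..0})"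
    by (intro compact_imp_bounded compact_continuous_image continuous_on_subset[OF cphi]) auto
  then obtain B2 where B2': "\<forall>s\<in>{-lbar..0}. norm (phi D a g A B C K s) \<le> B2"
    unfolding bounded_iff by auto
  then have B2: "\<And>s. s \<in> {-lbar..0} \<Longrightarrow> norm (phi D a g A B C K s) \<le> B2" by blast
  define CF where "CF = \<bar>B1\<bar> + \<bar>1/D\<bar> * \<bar>B2\<bar> * norm B * norm C"
  show ?thesis
  proof (rule that[of CF])
    show "CF \<ge> 0" unfolding CF_def by simp
    fix L x X assume h: "0 \<le> x" "x \<le> L" "L \<le> lbar"
    have s: "x - L \<in> {-lbar..0}" using h by auto
    have vd: "vector_derivative (phi D a g A B C K) (at (x - L)) = \<Phi>' (x - L)"
      by (rule vector_derivative_at[OF d])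
    have k: "\<bar>kker D a g A B C K x L\<bar> \<le> \<bar>1/D\<bar> * \<bar>B2\<bar> * norm B"
    proof -
      have "\<bar>kker D a g A B C K x L\<bar> = \<bar>1/D\<bar> * \<bar>phi D a g A B C K (x - L) \<bullet> B\<bar>"
        unfolding kker_def by (simp add: abs_mult)
      also have "\<dots> \<le> \<bar>1/D\<bar> * (\<bar>B2\<bar> * norm B)"
      proof (rule mult_left_mono)
        have "\<bar>phi D a g A B C K (x - L) \<bullet> B\<bar> \<le> norm (phi D a g A B C K (x - L)) * norm B"
          by (rule Cauchy_Schwarz_ineq2)
        also have "\<dots> \<le> \<bar>B2\<bar> * norm B"
          using B2[OF s] by (intro mult_right_mono) auto
        finally show "\<bar>phi D a g A B C K (x - L) \<bullet> B\<bar> \<le> \<bar>B2\<bar> * norm B" .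
      qed simp
      finally show ?thesis by (simp add: mult_ac)
    qed
    have "\<bar>Fterm D a g A B C K L x X\<bar> \<le> norm (\<Phi>' (x - L) - kker D a g A B C K x L *\<^sub>R C) * norm X"
      unfolding Fterm_def vd by (rule Cauchy_Schwarz_ineq2)
    also have "\<dots> \<le> CF * norm X"
    proof (rule mult_right_mono)
      have "norm (\<Phi>' (x - L) - kker D a g A B C K x L *\<^sub>R C) \<le> norm (\<Phi>' (x - L)) + \<bar>kker D a g A B C K x L\<bar> * norm C"
        using norm_triangle_ineq4 by (metis norm_scaleR)
      also have "\<dots> \<le> \<bar>B1\<bar> + (\<bar>1/D\<bar> * \<bar>B2\<bar> * norm B) * norm C"
        using B1[OF s] k by (intro add_mono mult_right_mono) auto
      finally show "norm (\<Phi>' (x - L) - kker D a g A B C K x L *\<^sub>R C) \<le> CF" unfolding CF_def by simp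
    qed simp
    finally show "\<bar>Fterm D a g A B C K L x X\<bar> \<le> CF * norm X" .
  qed
qed


lemma real_deriv_crit:
  fixes G :: "real \<Rightarrow> real"
  assumes "\<And>e. e > 0 \<Longrightarrow> \<exists>d>0. \<forall>s\<in>S. \<bar>s - t\<bar> < d \<longrightarrow> \<bar>G s - G t - (s - t) * G'\<bar> \<le> e * \<bar>s - t\<bar>"
  shows "(G has_real_derivative G') (at t within S)"
  unfolding has_field_derivative_iff tendsto_iff eventually_at
proof (intro allI impI)
  fix e :: real assume e: "e > 0"
  obtain d where d: "d > 0" "\<forall>s\<in>S. \<bar>s - t\<bar> < d \<longrightarrow> \<bar>G s - G t - (s - t) * G'\<bar> \<le> (e/2) * \<bar>s - t\<bar>"
    using assms[of "e/2"] e by auto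
  show "\<exists>d>0. \<forall>x\<in>S. x \<noteq> t \<and> dist x t < d \<longrightarrow> dist ((G x - G t) / (x - t)) G' < e"
  proof (intro exI[of _ d] conjI ballI impI)
    fix s assume s: "s \<in> S" "s \<noteq> t \<and> dist s t < d"
    then have st: "\<bar>s - t\<bar> > 0" "\<bar>s - t\<bar> < d" by (auto simp: dist_real_def)
    have "(G s - G t) / (s - t) - G' = (G s - G t - (s - t) * G') / (s - t)"
      using s by (simp add: field_simps)
    then have "dist ((G s - G t) / (s - t)) G' = \<bar>G s - G t - (s - t) * G'\<bar> / \<bar>s - t\<bar>"
      by (simp add: dist_real_def abs_divide)
    also have "\<dots> \<le> e/2"
      using d(2) s st by (simp add: divide_le_eq)
    finally show "dist ((G s - G t) / (s - t)) G' < e" using e by linarith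
  qed (use d in auto)
qed

lemma real_deriv_critD:
  fixes G :: "real \<Rightarrow> real"
  assumes "(G has_real_derivative G') (at t within S)" "e > 0"
  shows "\<exists>d>0. \<forall>s\<in>S. \<bar>s - t\<bar> < d \<longrightarrow> \<bar>G s - G t - (s - t) * G'\<bar> \<le> e * \<bar>s - t\<bar>"
proof -
  from assms(1) have "\<forall>\<^sub>F s in at t within S. dist ((G s - G t) / (s - t)) G' < e"
    unfolding has_field_derivative_iff tendsto_iff using assms(2) by blast
  then obtain d where d: "d > 0" "\<forall>s\<in>S. s \<noteq> t \<and> dist s t < d \<longrightarrow> dist ((G s - G t) / (s - t)) G' < e"
    unfolding eventually_at by blast
  show ?thesis
  proof (intro exI[of _ d] conjI ballI impI)
    fix s assume s: "s \<in> S" "\<bar>s - t\<bar> < d"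
    show "\<bar>G s - G t - (s - t) * G'\<bar> \<le> e * \<bar>s - t\<bar>"
    proof (cases "s = t")
      case False
      then have "dist ((G s - G t) / (s - t)) G' < e" using d s by (auto simp: dist_real_def)
      moreover have "(G s - G t) / (s - t) - G' = (G s - G t - (s - t) * G') / (s - t)"
        using False by (simp add: field_simps)
      ultimately have "\<bar>G s - G t - (s - t) * G'\<bar> / \<bar>s - t\<bar> < e"
        by (simp add: dist_real_def abs_divide)
      then show ?thesis using False by (simp add: divide_less_eq less_imp_le)
    qed simp
  qed (use d in auto)
qed

lemma closed_Omega:
  assumes "continuous_on {0..} (l::real \<Rightarrow> real)"
  shows "closed {(x, s). 0 \<le> s \<and> 0 \<le> x \<and> x \<le> l s}"
proof -
  have c: "closed ({p::real\<times>real. 0 \<le> snd p} \<inter> (\<lambda>p. fst p - l (snd p)) -` {..0})"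
  proof (rule continuous_closed_preimage)
    show "continuous_on {p::real\<times>real. 0 \<le> snd p} (\<lambda>p. fst p - l (snd p))"
      by (intro continuous_on_diff continuous_on_fst continuous_on_id
          continuous_on_compose2[OF assms continuous_on_snd]) auto
    show "closed {p::real\<times>real. 0 \<le> snd p}"
      by (intro closed_Collect_le continuous_on_snd continuous_on_const continuous_on_id)
  qed auto
  have c2: "closed {p::real\<times>real. 0 \<le> fst p}"
    by (intro closed_Collect_le continuous_on_fst continuous_on_const continuous_on_id)
  have "{(x, s). 0 \<le> s \<and> 0 \<le> x \<and> x \<le> l s} = ({p::real\<times>real. 0 \<le> snd p} \<inter> (\<lambda>p. fst p - l (snd p)) -` {..0}) \<inter> {p. 0 \<le> fst p}"
    by auto
  then show ?thesis using c c2 by (simp add: closed_Int)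
qed

lemma slice_cont:
  fixes f :: "real \<Rightarrow> real \<Rightarrow> real" and l :: "real \<Rightarrow> real"
  assumes "continuous_on {(x, s). 0 \<le> s \<and> 0 \<le> x \<and> x \<le> l s} (\<lambda>(x, s). f x s)"
    and "0 \<le> s" "0 \<le> a" "b \<le> l s"
  shows "continuous_on {a..b} (\<lambda>y. f y s)"
proof -
  have sub: "(\<lambda>y. (y, s)) ` {a..b} \<subseteq> {(x, s). 0 \<le> s \<and> 0 \<le> x \<and> x \<le> l s}"
    using assms(2-4) by auto
  have "continuous_on {a..b} ((\<lambda>(x, s). f x s) \<circ> (\<lambda>y. (y, s)))"
    by (rule continuous_on_compose[OF continuous_on_Pair[OF continuous_on_id continuous_on_const]
          continuous_on_subset[OF assms(1) sub]])
  then show ?thesis by (simp add: o_def)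
qed

lemma mvt_slice:
  fixes f ft :: "real \<Rightarrow> real \<Rightarrow> real"
  assumes d: "\<And>r. r \<in> {min t s..max t s} \<Longrightarrow> ((\<lambda>r. f y r) has_real_derivative ft y r) (at r within {min t s..max t s})"
    and b: "\<And>r. r \<in> {min t s..max t s} \<Longrightarrow> \<bar>ft y r - ft y t\<bar> \<le> e"
  shows "\<bar>f y s - f y t - (s - t) * ft y t\<bar> \<le> e * \<bar>s - t\<bar>"
proof -
  let ?S = "{min t s..max t s}"
  have "norm ((\<lambda>r. f y r - r * ft y t) s - (\<lambda>r. f y r - r * ft y t) t) \<le> e * norm (s - t)"
  proof (rule field_differentiable_bound[where f' = "\<lambda>r. ft y r - 1 * ft y t"])
    show "convex ?S" by (rule convex_real_interval)
    fix z assume z: "z \<in> ?S"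
    show "((\<lambda>r. f y r - r * ft y t) has_field_derivative ft y z - 1 * ft y t) (at z within ?S)"
      by (rule DERIV_diff[OF d[OF z] DERIV_cmult_right[OF DERIV_ident]])
    show "norm (ft y z - 1 * ft y t) \<le> e" using b[OF z] by simp
  qed auto
  then show ?thesis by (simp add: algebra_simps)
qed

lemma leibniz_moving:
  fixes f ft :: "real \<Rightarrow> real \<Rightarrow> real" and l :: "real \<Rightarrow> real"
  assumes lc: "continuous_on {0..} l"
    and ld: "(l has_real_derivative l') (at t within {0..})"
    and t: "0 \<le> t" and x0: "0 \<le> x0" "x0 < l t"
    and fc: "continuous_on {(x, s). 0 \<le> s \<and> 0 \<le> x \<and> x \<le> l s} (\<lambda>(x, s). f x s)"
    and ftc: "continuous_on {(x, s). 0 \<le> s \<and> 0 \<le> x \<and> x \<le> l s} (\<lambda>(x, s). ft x s)"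
    and fd: "\<And>x s. 0 \<le> s \<Longrightarrow> 0 \<le> x \<Longrightarrow> x \<le> l s \<Longrightarrow>
               ((\<lambda>r. f x r) has_real_derivative ft x s) (at s within {r. 0 \<le> r \<and> x \<le> l r})"
  shows "((\<lambda>s. integral {x0..l s} (\<lambda>y. f y s)) has_real_derivative
            (l' * f (l t) t + integral {x0..l t} (\<lambda>y. ft y t))) (at t within {0..})"
proof (rule real_deriv_crit)
  fix \<epsilon> :: real assume \<epsilon>: "\<epsilon> > 0"
  define L where "L = l t"
  define \<Omega> where "\<Omega> = {(x, s). 0 \<le> s \<and> 0 \<le> x \<and> x \<le> l s}"
  define K where "K = \<Omega> \<inter> cbox (0, 0) (L + 1, t + 1)"
  have L0: "L > 0" using x0 unfolding L_def by linarith
  have cK: "compact K" unfolding K_def \<Omega>_def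
    by (intro closed_Int_compact closed_Omega[OF lc] compact_cbox)
  have KO: "K \<subseteq> \<Omega>" unfolding K_def by auto
  have ftK: "continuous_on K (\<lambda>(x, s). ft x s)"
    by (rule continuous_on_subset[OF ftc[folded \<Omega>_def] KO])
  have "bounded ((\<lambda>(x, s). ft x s) ` K)"
    by (intro compact_imp_bounded compact_continuous_image ftK cK)
  then obtain Bft0 where Bft0: "\<forall>p\<in>K. norm ((\<lambda>(x, s). ft x s) p) \<le> Bft0"
    unfolding bounded_iff by auto
  define Bft where "Bft = \<bar>Bft0\<bar>"
  have Bft: "\<And>y r. (y, r) \<in> K \<Longrightarrow> \<bar>ft y r\<bar> \<le> Bft" and Bft_pos: "Bft \<ge> 0"
    using Bft0 unfolding Bft_def by fastforce+
  define c where "c = \<bar>l'\<bar> + 1"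
  have c1: "c \<ge> 1" unfolding c_def by simp
  define fL where "fL = f L t"
  define e1 where "e1 = \<epsilon> / (4 * (L + 1))"
  have e1: "e1 > 0" unfolding e1_def using \<epsilon> L0 by simp
  obtain d1 where d1: "d1 > 0"
    "\<forall>p\<in>K. \<forall>q\<in>K. dist q p < d1 \<longrightarrow> dist ((\<lambda>(x, s). ft x s) q) ((\<lambda>(x, s). ft x s) p) < e1"
    using compact_uniformly_continuous[OF ftK cK] e1 unfolding uniformly_continuous_on_def by metis
  define e2 where "e2 = \<epsilon> / (12 * c)"
  have e2: "e2 > 0" unfolding e2_def using \<epsilon> c1 by simp
  have LtO: "(L, t) \<in> \<Omega>" unfolding \<Omega>_def L_def using t L0 L_def by auto
  obtain d2 where d2: "d2 > 0"
    "\<forall>q\<in>\<Omega>. dist q (L, t) < d2 \<longrightarrow> dist ((\<lambda>(x, s). f x s) q) ((\<lambda>(x, s). f x s) (L, t)) < e2"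
    using fc[folded \<Omega>_def] LtO e2 unfolding continuous_on_iff by metis
  define e3 where "e3 = min 1 (\<epsilon> / (4 * (\<bar>fL\<bar> + 1)))"
  have e3: "e3 > 0" unfolding e3_def using \<epsilon> by simp
  obtain d3 where d3: "d3 > 0" "\<forall>s\<in>{0..}. \<bar>s - t\<bar> < d3 \<longrightarrow> \<bar>l s - l t - (s - t) * l'\<bar> \<le> e3 * \<bar>s - t\<bar>"
    using real_deriv_critD[OF ld e3] by blast
  define \<delta> where "\<delta> = min (min d1 (d2 / (c + 1))) (min d3 (min ((L - x0) / (2 * c))
                      (min (1 / c) (min 1 (\<epsilon> / (4 * (c * Bft + 1)))))))"
  have p1: "0 < c * Bft + 1" using c1 Bft_pos by (simp add: add_nonneg_pos)
  have p2: "0 < (L - x0) / (2 * c)" using x0 c1 L_def by simp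
  have p3: "0 < \<epsilon> / (4 * (c * Bft + 1))" using \<epsilon> p1 by simp
  have p4: "0 < d2 / (c + 1)" using d2 c1 by simp
  have p5: "0 < 1 / c" using c1 by simp
  have \<delta>: "\<delta> > 0" unfolding \<delta>_def using d1 d3 p2 p3 p4 p5 by simp
  show "\<exists>d>0. \<forall>s\<in>{0..}. \<bar>s - t\<bar> < d \<longrightarrow>
     \<bar>integral {x0..l s} (\<lambda>y. f y s) - integral {x0..l t} (\<lambda>y. f y t) -
      (s - t) * (l' * f (l t) t + integral {x0..l t} (\<lambda>y. ft y t))\<bar> \<le> \<epsilon> * \<bar>s - t\<bar>"
  proof (intro exI[of _ \<delta>] conjI ballI impI)
    show "\<delta> > 0" by (rule \<delta>)
    fix s assume s0: "s \<in> {0..}" and st: "\<bar>s - t\<bar> < \<delta>"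
    have sd1: "\<bar>s - t\<bar> < d1" and sd3: "\<bar>s - t\<bar> < d3" and sd1': "\<bar>s - t\<bar> < 1"
      and q2: "\<bar>s - t\<bar> < d2 / (c + 1)" and qx: "\<bar>s - t\<bar> < (L - x0) / (2 * c)"
      and qc: "\<bar>s - t\<bar> < 1 / c" and qe: "\<bar>s - t\<bar> < \<epsilon> / (4 * (c * Bft + 1))"
      using st unfolding \<delta>_def by auto
    have sd2: "\<bar>s - t\<bar> * (c + 1) < d2" using q2 c1 by (simp add: pos_less_divide_eq)
    have sdx: "\<bar>s - t\<bar> * (2 * c) < L - x0" using qx c1 by (simp add: pos_less_divide_eq)
    have sdc: "\<bar>s - t\<bar> * c < 1" using qc c1 by (simp add: pos_less_divide_eq)
    have sde: "\<bar>s - t\<bar> * (4 * (c * Bft + 1)) < \<epsilon>" using qe p1 by (simp add: pos_less_divide_eq)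
    have cst: "0 \<le> c * \<bar>s - t\<bar>" using c1 by simp
    define I where "I = {min t s..max t s}"
    have I0: "\<And>r. r \<in> I \<Longrightarrow> 0 \<le> r \<and> \<bar>r - t\<bar> \<le> \<bar>s - t\<bar>" using s0 t unfolding I_def by auto
    have lr: "\<bar>l r - L\<bar> \<le> c * \<bar>s - t\<bar>" if r: "r \<in> I" for r
    proof -
      have "\<bar>l r - l t - (r - t) * l'\<bar> \<le> e3 * \<bar>r - t\<bar>"
        using d3(2) I0[OF r] sd3 by auto
      moreover have "e3 * \<bar>r - t\<bar> \<le> \<bar>r - t\<bar>"
        using e3 by (intro mult_left_le_one_le) (auto simp: e3_def)
      moreover have "\<bar>(r - t) * l'\<bar> \<le> \<bar>s - t\<bar> * \<bar>l'\<bar>"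
        using I0[OF r] by (simp add: abs_mult mult_right_mono)
      ultimately show ?thesis using I0[OF r] unfolding c_def L_def by (simp add: algebra_simps) linarith
    qed
    have tI: "t \<in> I" and sI: "s \<in> I" unfolding I_def by auto
    have cI: "compact I" unfolding I_def by simp
    have nI: "I \<noteq> {}" using tI by auto
    have lI: "continuous_on I l" by (rule continuous_on_subset[OF lc]) (use I0 in auto)
    obtain rs where rs: "rs \<in> I" "\<forall>r\<in>I. l rs \<le> l r"
      using continuous_attains_inf[OF cI nI lI] by blast
    define m where "m = l rs"
    have mL: "m \<le> L" and mls: "m \<le> l s" using rs tI sI unfolding m_def L_def by auto
    have Lm: "L - m \<le> c * \<bar>s - t\<bar>" using lr[OF rs(1)] unfolding m_def by linarith
    have lsL: "\<bar>l s - L\<bar> \<le> c * \<bar>s - t\<bar>" by (rule lr[OF sI])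
    have lsm: "l s - m \<le> 2 * c * \<bar>s - t\<bar>" using Lm lsL by linarith
    have mx0: "x0 < m" using Lm sdx cst by (simp add: algebra_simps)
    have "c * \<bar>s - t\<bar> < 1" using sdc by (simp add: mult.commute)
    then have ls1: "l s \<le> L + 1" using lsL by linarith
    have mI: "\<And>r. r \<in> I \<Longrightarrow> m \<le> l r" using rs unfolding m_def by auto
    have s0': "0 \<le> s" using s0 by simp
    have cfs: "continuous_on {x0..l s} (\<lambda>y. f y s)"
      by (rule slice_cont[OF fc s0' x0(1)]) simp
    have cft: "continuous_on {x0..L} (\<lambda>y. f y t)"
      by (rule slice_cont[OF fc t x0(1)]) (simp add: L_def)
    have cftt: "continuous_on {x0..L} (\<lambda>y. ft y t)"
      by (rule slice_cont[OF ftc t x0(1)]) (simp add: L_def)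
    have ifs: "(\<lambda>y. f y s) integrable_on {x0..l s}" by (rule integrable_continuous_real[OF cfs])
    have ift: "(\<lambda>y. f y t) integrable_on {x0..L}" by (rule integrable_continuous_real[OF cft])
    have iftt: "(\<lambda>y. ft y t) integrable_on {x0..L}" by (rule integrable_continuous_real[OF cftt])
    have cfs1: "continuous_on {x0..m} (\<lambda>y. f y s)" by (rule continuous_on_subset[OF cfs]) (use mls in auto)
    have cft1: "continuous_on {x0..m} (\<lambda>y. f y t)" by (rule continuous_on_subset[OF cft]) (use mL in auto)
    have cftt1: "continuous_on {x0..m} (\<lambda>y. ft y t)" by (rule continuous_on_subset[OF cftt]) (use mL in auto)
    have cfs2: "continuous_on {m..l s} (\<lambda>y. f y s)" by (rule continuous_on_subset[OF cfs]) (use mx0 in auto)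
    have cft2: "continuous_on {m..L} (\<lambda>y. f y t)" by (rule continuous_on_subset[OF cft]) (use mx0 in auto)
    have cftt2: "continuous_on {m..L} (\<lambda>y. ft y t)" by (rule continuous_on_subset[OF cftt]) (use mx0 in auto)
    define Fs1 where "Fs1 = integral {x0..m} (\<lambda>y. f y s)"
    define Fs2 where "Fs2 = integral {m..l s} (\<lambda>y. f y s)"
    define Ft1 where "Ft1 = integral {x0..m} (\<lambda>y. f y t)"
    define Ft2 where "Ft2 = integral {m..L} (\<lambda>y. f y t)"
    define J1 where "J1 = integral {x0..m} (\<lambda>y. ft y t)"
    define J2 where "J2 = integral {m..L} (\<lambda>y. ft y t)"
    have Gs: "integral {x0..l s} (\<lambda>y. f y s) = Fs1 + Fs2"
      unfolding Fs1_def Fs2_def by (rule Henstock_Kurzweil_Integration.integral_combine[symmetric]) (use mx0 mls ifs in auto)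
    have Gt: "integral {x0..l t} (\<lambda>y. f y t) = Ft1 + Ft2"
      unfolding Ft1_def Ft2_def L_def[symmetric] by (rule Henstock_Kurzweil_Integration.integral_combine[symmetric]) (use mx0 mL ift in auto)
    have Jt: "integral {x0..l t} (\<lambda>y. ft y t) = J1 + J2"
      unfolding J1_def J2_def L_def[symmetric] by (rule Henstock_Kurzweil_Integration.integral_combine[symmetric]) (use mx0 mL iftt in auto)
    define E where "E = \<epsilon> * \<bar>s - t\<bar>"
    have hA: "\<bar>Fs1 - Ft1 - (s - t) * J1\<bar> \<le> E / 4"
    proof -
      have eq: "Fs1 - Ft1 - (s - t) * J1 = integral {x0..m} (\<lambda>y. f y s - f y t - (s - t) * ft y t)"
      proof -
        have i1: "(\<lambda>y. f y s - f y t) integrable_on {x0..m}"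
          by (intro integrable_continuous_real continuous_on_diff cfs1 cft1)
        have i2: "(\<lambda>y. (s - t) * ft y t) integrable_on {x0..m}"
          by (intro integrable_continuous_real continuous_on_mult continuous_on_const cftt1)
        have "integral {x0..m} (\<lambda>y. f y s - f y t - (s - t) * ft y t)
            = integral {x0..m} (\<lambda>y. f y s - f y t) - integral {x0..m} (\<lambda>y. (s - t) * ft y t)"
          by (rule integral_diff[OF i1 i2])
        also have "integral {x0..m} (\<lambda>y. f y s - f y t) = Fs1 - Ft1"
          unfolding Fs1_def Ft1_def
          by (rule integral_diff[OF integrable_continuous_real[OF cfs1] integrable_continuous_real[OF cft1]])
        also have "integral {x0..m} (\<lambda>y. (s - t) * ft y t) = (s - t) * J1"
          unfolding J1_def
          by (rule Henstock_Kurzweil_Integration.integral_mult[OF integrable_continuous_real[OF cftt1], symmetric])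
        finally show ?thesis by simp
      qed
      have "\<bar>integral {x0..m} (\<lambda>y. f y s - f y t - (s - t) * ft y t)\<bar> \<le> (e1 * \<bar>s - t\<bar>) * (m - x0)"
      proof -
        have "norm (integral {x0..m} (\<lambda>y. f y s - f y t - (s - t) * ft y t)) \<le> (e1 * \<bar>s - t\<bar>) * (m - x0)"
        proof (rule integral_bound)
          show "x0 \<le> m" using mx0 by simp
          show "continuous_on {x0..m} (\<lambda>y. f y s - f y t - (s - t) * ft y t)"
            by (intro continuous_on_diff continuous_on_mult cfs1 cft1 cftt1 continuous_on_const)
          fix y assume y: "y \<in> {x0..m}"
          have der: "((\<lambda>r. f y r) has_real_derivative ft y r) (at r within {min t s..max t s})"
            if r: "r \<in> {min t s..max t s}" for r
          proof -
            have rI: "r \<in> I" using r unfolding I_def .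
            have yr: "0 \<le> r" "0 \<le> y" "y \<le> l r" using I0[OF rI] y x0 mI[OF rI] by auto
            have sub: "{min t s..max t s} \<subseteq> {r. 0 \<le> r \<and> y \<le> l r}"
            proof
              fix r' assume "r' \<in> {min t s..max t s}"
              then have r'I: "r' \<in> I" unfolding I_def .
              show "r' \<in> {r. 0 \<le> r \<and> y \<le> l r}" using I0[OF r'I] mI[OF r'I] y by auto
            qed
            show ?thesis
              by (rule DERIV_subset[OF fd[OF yr] sub])
          qed
          have bd: "\<bar>ft y r - ft y t\<bar> \<le> e1" if r: "r \<in> {min t s..max t s}" for r
          proof -
            have rI: "r \<in> I" using r unfolding I_def .
            have yr: "0 \<le> r" "0 \<le> y" "y \<le> l r" using I0[OF rI] y x0 mI[OF rI] by auto
            have yK1: "(y, r) \<in> K" using yr I0[OF rI] sd1' y mL unfolding K_def \<Omega>_def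
              by (auto simp: cbox_Pair_iff)
            have yK2: "(y, t) \<in> K" using y mL mI[OF tI] t x0 L_def unfolding K_def \<Omega>_def
              by (auto simp: cbox_Pair_iff)
            have "dist (y, r) (y, t) = \<bar>r - t\<bar>" by (simp add: dist_Pair_Pair dist_real_def)
            also have "\<dots> < d1" using I0[OF rI] sd1 by linarith
            finally have "dist (ft y r) (ft y t) < e1" using d1(2) yK1 yK2 by fastforce
            then show "\<bar>ft y r - ft y t\<bar> \<le> e1" by (simp add: dist_real_def)
          qed
          show "norm (f y s - f y t - (s - t) * ft y t) \<le> e1 * \<bar>s - t\<bar>"
            unfolding real_norm_def by (rule mvt_slice[where f=f and ft=ft and y=y, OF der bd])
        qed
        then show ?thesis by simp
      qed
      also have "\<dots> \<le> (e1 * \<bar>s - t\<bar>) * (L + 1)"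
        using mL x0 e1 by (intro mult_left_mono) auto
      also have "\<dots> = E / 4" unfolding e1_def E_def using L0 by (simp add: field_simps)
      finally show ?thesis using eq by simp
    qed
    have fclose: "\<bar>f y r - fL\<bar> \<le> e2" if "(y, r) \<in> \<Omega>" "\<bar>y - L\<bar> \<le> c * \<bar>s - t\<bar>" "\<bar>r - t\<bar> \<le> \<bar>s - t\<bar>" for y r
    proof -
      have "dist (y, r) (L, t) \<le> norm (y - L, r - t)" by (simp add: dist_norm)
      also have "\<dots> \<le> \<bar>y - L\<bar> + \<bar>r - t\<bar>" using norm_Pair_le[of "y - L" "r - t"] by simp
      also have "\<dots> \<le> \<bar>s - t\<bar> * (c + 1)" using that by (simp add: algebra_simps)
      also have "\<dots> < d2" by (rule sd2)
      finally have "dist (f y r) fL < e2" using d2(2) that(1) unfolding fL_def by fastforce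
      then show ?thesis by (simp add: dist_real_def)
    qed
    have hP1: "\<bar>Fs2 - (l s - m) * fL\<bar> \<le> e2 * (l s - m)"
    proof -
      have eq: "Fs2 - (l s - m) * fL = integral {m..l s} (\<lambda>y. f y s - fL)"
        unfolding Fs2_def using mls
        by (simp add: integral_diff[OF integrable_continuous_real[OF cfs2] integrable_const_ivl] content_real)
      have "norm (integral {m..l s} (\<lambda>y. f y s - fL)) \<le> e2 * (l s - m)"
      proof (rule integral_bound)
        show "m \<le> l s" by (rule mls)
        show "continuous_on {m..l s} (\<lambda>y. f y s - fL)"
          by (intro continuous_on_diff cfs2 continuous_on_const)
        fix y assume y: "y \<in> {m..l s}"
        have "(y, s) \<in> \<Omega>" using y mx0 x0 s0' unfolding \<Omega>_def by auto
        moreover have "\<bar>y - L\<bar> \<le> c * \<bar>s - t\<bar>" using y Lm lsL by auto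
        ultimately show "norm (f y s - fL) \<le> e2" using fclose by simp
      qed
      then show ?thesis using eq by simp
    qed
    have hP2: "\<bar>Ft2 - (L - m) * fL\<bar> \<le> e2 * (L - m)"
    proof -
      have eq: "Ft2 - (L - m) * fL = integral {m..L} (\<lambda>y. f y t - fL)"
        unfolding Ft2_def using mL
        by (simp add: integral_diff[OF integrable_continuous_real[OF cft2] integrable_const_ivl] content_real)
      have "norm (integral {m..L} (\<lambda>y. f y t - fL)) \<le> e2 * (L - m)"
      proof (rule integral_bound)
        show "m \<le> L" by (rule mL)
        show "continuous_on {m..L} (\<lambda>y. f y t - fL)"
          by (intro continuous_on_diff cft2 continuous_on_const)
        fix y assume y: "y \<in> {m..L}"
        have "(y, t) \<in> \<Omega>" using y mx0 x0 t unfolding \<Omega>_def L_def by auto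
        moreover have "\<bar>y - L\<bar> \<le> c * \<bar>s - t\<bar>" using y Lm by auto
        ultimately show "norm (f y t - fL) \<le> e2" using fclose by simp
      qed
      then show ?thesis using eq by simp
    qed
    have hP: "e2 * (l s - m) + e2 * (L - m) \<le> E / 4"
    proof -
      have "(l s - m) + (L - m) \<le> 3 * c * \<bar>s - t\<bar>" using lsm Lm by linarith
      then have "e2 * ((l s - m) + (L - m)) \<le> e2 * (3 * c * \<bar>s - t\<bar>)"
        using e2 by (intro mult_left_mono) auto
      then have "e2 * (l s - m) + e2 * (L - m) \<le> e2 * (3 * c * \<bar>s - t\<bar>)"
        by (simp only: distrib_left)
      also have "\<dots> = E / 4" unfolding e2_def E_def using c1 by (simp add: field_simps)
      finally show ?thesis .
    qed
    have hD: "\<bar>(l s - L - (s - t) * l') * fL\<bar> \<le> E / 4"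
    proof -
      have h1: "\<bar>l s - L - (s - t) * l'\<bar> \<le> e3 * \<bar>s - t\<bar>" using d3(2) s0 sd3 unfolding L_def by auto
      have h2: "e3 \<le> \<epsilon> / (4 * (\<bar>fL\<bar> + 1))" unfolding e3_def by (rule min.cobounded2)
      have "\<bar>(l s - L - (s - t) * l') * fL\<bar> = \<bar>l s - L - (s - t) * l'\<bar> * \<bar>fL\<bar>" by (rule abs_mult)
      also have "\<dots> \<le> (e3 * \<bar>s - t\<bar>) * \<bar>fL\<bar>" by (rule mult_right_mono[OF h1]) simp
      also have "\<dots> \<le> (e3 * \<bar>s - t\<bar>) * (\<bar>fL\<bar> + 1)" by (rule mult_left_mono) (use e3 in auto)
      also have "\<dots> \<le> (\<epsilon> / (4 * (\<bar>fL\<bar> + 1)) * \<bar>s - t\<bar>) * (\<bar>fL\<bar> + 1)"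
        by (rule mult_right_mono[OF mult_right_mono[OF h2]]) auto
      also have "\<dots> = E / 4"
      proof -
        have nz: "\<bar>fL\<bar> + 1 \<noteq> 0" by linarith
        show ?thesis unfolding E_def using nz by (simp add: field_simps)
      qed
      finally show ?thesis .
    qed
    have hC: "\<bar>(s - t) * J2\<bar> \<le> E / 4"
    proof -
      have "norm (integral {m..L} (\<lambda>y. ft y t)) \<le> Bft * (L - m)"
      proof (rule integral_bound)
        show "m \<le> L" by (rule mL)
        show "continuous_on {m..L} (\<lambda>y. ft y t)" by (rule cftt2)
        fix y assume y: "y \<in> {m..L}"
        have "(y, t) \<in> K" using y mx0 x0 t unfolding K_def \<Omega>_def L_def by (auto simp: cbox_Pair_iff)
        then show "norm (ft y t) \<le> Bft" using Bft by simp
      qed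
      moreover have "Bft * (L - m) \<le> Bft * (c * \<bar>s - t\<bar>)"
        using Lm Bft_pos by (intro mult_left_mono) auto
      ultimately have "\<bar>J2\<bar> \<le> Bft * (c * \<bar>s - t\<bar>)" unfolding J2_def by simp
      then have "\<bar>(s - t) * J2\<bar> \<le> \<bar>s - t\<bar> * (Bft * (c * \<bar>s - t\<bar>))"
        by (simp add: abs_mult mult_left_mono)
      also have "\<dots> \<le> \<bar>s - t\<bar> * (\<epsilon> / 4)"
      proof (rule mult_left_mono)
        have "Bft * (c * \<bar>s - t\<bar>) \<le> (c * Bft + 1) * \<bar>s - t\<bar>" by (simp add: algebra_simps)
        also have "\<dots> \<le> \<epsilon> / 4" using sde by (simp add: algebra_simps)
        finally show "Bft * (c * \<bar>s - t\<bar>) \<le> \<epsilon> / 4" .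
      qed simp
      also have "\<dots> = E / 4" unfolding E_def by simp
      finally show ?thesis .
    qed
    have ident: "integral {x0..l s} (\<lambda>y. f y s) - integral {x0..l t} (\<lambda>y. f y t) -
      (s - t) * (l' * f (l t) t + integral {x0..l t} (\<lambda>y. ft y t))
      = (Fs1 - Ft1 - (s - t) * J1) + (Fs2 - (l s - m) * fL) - (Ft2 - (L - m) * fL)
        + (l s - L - (s - t) * l') * fL - (s - t) * J2"
      unfolding Gs Gt Jt fL_def L_def by (simp add: algebra_simps)
    show "\<bar>integral {x0..l s} (\<lambda>y. f y s) - integral {x0..l t} (\<lambda>y. f y t) -
      (s - t) * (l' * f (l t) t + integral {x0..l t} (\<lambda>y. ft y t))\<bar> \<le> \<epsilon> * \<bar>s - t\<bar>"
      unfolding ident E_def[symmetric] using hA hP1 hP2 hP hD hC by linarith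
  qed
qed


lemma ftc_real:
  fixes f f' :: "real \<Rightarrow> real"
  assumes "a \<le> b" "\<And>x. x \<in> {a..b} \<Longrightarrow> (f has_real_derivative f' x) (at x within {a..b})"
  shows "integral {a..b} f' = f b - f a"
  using fundamental_theorem_of_calculus[OF assms(1), of f f'] assms(2)
  by (simp add: has_real_derivative_iff_has_vector_derivative integral_unique)

lemma integral_le_open:
  fixes f g :: "real \<Rightarrow> real"
  assumes "continuous_on {a..b} f" "continuous_on {a..b} g" "\<And>x. a < x \<Longrightarrow> x < b \<Longrightarrow> f x \<le> g x"
  shows "integral {a..b} f \<le> integral {a..b} g"
proof -
  have "f integrable_on {a<..<b}" "g integrable_on {a<..<b}"
    using integrable_continuous_real[OF assms(1)] integrable_continuous_real[OF assms(2)]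
      integrable_on_open_interval_real by blast+
  then have "integral {a<..<b} f \<le> integral {a<..<b} g"
    by (rule integral_le) (use assms(3) in auto)
  then show ?thesis by (simp add: integral_open_interval_real)
qed

lemma ii: "continuous_on {a..b} (f::real\<Rightarrow>real) \<Longrightarrow> (f has_integral integral {a..b} f) {a..b}"
  by (rule integrable_integral[OF integrable_continuous_real])

lemma fixed_time_bounds:
  fixes u ux uxx ut :: "real \<Rightarrow> real"
  assumes L: "0 < L" and D: "0 < D"
    and cu: "continuous_on {0..L} u" and cux: "continuous_on {0..L} ux"
    and cuxx: "continuous_on {0..L} uxx" and cut: "continuous_on {0..L} ut"
    and du: "\<And>y. y \<in> {0..L} \<Longrightarrow> (u has_real_derivative ux y) (at y within {0..L})"
    and dux: "\<And>y. y \<in> {0..L} \<Longrightarrow> (ux has_real_derivative uxx y) (at y within {0..L})"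
    and bc0: "ux 0 = \<gamma> * u 0" and bcL: "u L = 0"
    and pde: "\<And>y. 0 < y \<Longrightarrow> y < L \<Longrightarrow> \<bar>ut y - (D * uxx y - a * ux y - g * u y)\<bar> \<le> \<kappa> * \<xi>"
    and \<kappa>: "0 \<le> \<kappa>" and \<xi>: "0 \<le> \<xi>"
  defines "I0 \<equiv> integral {0..L} (\<lambda>y. (u y)\<^sup>2)" and "I1 \<equiv> integral {0..L} (\<lambda>y. (ux y)\<^sup>2)"
    and "I2 \<equiv> integral {0..L} (\<lambda>y. (uxx y)\<^sup>2)" and "J \<equiv> integral {0..L} (\<lambda>y. ux y * uxx y)"
  shows "integral {0..L} (\<lambda>y. u y * ut y)
           \<le> - D * \<gamma> * (u 0)\<^sup>2 + a / 2 * (u 0)\<^sup>2 - D * I1 - g * I0 + \<kappa> / 2 * (I0 + L * \<xi>\<^sup>2)"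
    and "- integral {0..L} (\<lambda>y. uxx y * ut y)
           \<le> - (3 * D / 4) * I2 + a\<^sup>2 / D * I1 - g * \<gamma> * (u 0)\<^sup>2 - g * I1 + \<kappa> / 2 * (I2 + L * \<xi>\<^sup>2)"
    and "(ux L)\<^sup>2 = \<gamma>\<^sup>2 * (u 0)\<^sup>2 + 2 * J"
    and "\<bar>J\<bar> \<le> (I1 + I2) / 2"
    and "0 \<le> I0" "0 \<le> I1" "0 \<le> I2"
proof -
  have L0: "0 \<le> L" using L by simp
  have F1: "integral {0..L} (\<lambda>y. (ux y)\<^sup>2 + u y * uxx y) = - \<gamma> * (u 0)\<^sup>2"
  proof -
    have "integral {0..L} (\<lambda>y. (ux y)\<^sup>2 + u y * uxx y) = u L * ux L - u 0 * ux 0"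
    proof (rule ftc_real[OF L0])
      fix y assume y: "y \<in> {0..L}"
      show "((\<lambda>y. u y * ux y) has_real_derivative (ux y)\<^sup>2 + u y * uxx y) (at y within {0..L})"
        by (rule DERIV_cong[OF DERIV_mult[OF du[OF y] dux[OF y]]]) (simp add: power2_eq_square mult.commute)
    qed
    then show ?thesis using bc0 bcL by (simp add: power2_eq_square)
  qed
  have F2: "integral {0..L} (\<lambda>y. u y * ux y) = - (u 0)\<^sup>2 / 2"
  proof -
    have "integral {0..L} (\<lambda>y. u y * ux y) = (u L)\<^sup>2 / 2 - (u 0)\<^sup>2 / 2"
    proof (rule ftc_real[OF L0])
      fix y assume y: "y \<in> {0..L}"
      show "((\<lambda>y. (u y)\<^sup>2 / 2) has_real_derivative u y * ux y) (at y within {0..L})"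
        unfolding power2_eq_square
        by (rule DERIV_cong[OF DERIV_cdivide[OF DERIV_mult[OF du[OF y] du[OF y]]]]) (simp add: mult.commute)
    qed
    then show ?thesis using bcL by simp
  qed
  have F3: "integral {0..L} (\<lambda>y. ux y * uxx y) = (ux L)\<^sup>2 / 2 - (ux 0)\<^sup>2 / 2"
  proof (rule ftc_real[OF L0])
    fix y assume y: "y \<in> {0..L}"
    show "((\<lambda>y. (ux y)\<^sup>2 / 2) has_real_derivative ux y * uxx y) (at y within {0..L})"
      unfolding power2_eq_square
      by (rule DERIV_cong[OF DERIV_cdivide[OF DERIV_mult[OF dux[OF y] dux[OF y]]]]) (simp add: mult.commute)
  qed
  have hI0: "((\<lambda>y. (u y)\<^sup>2) has_integral I0) {0..L}" unfolding I0_def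
    by (intro ii continuous_on_power cu)
  have hI1: "((\<lambda>y. (ux y)\<^sup>2) has_integral I1) {0..L}" unfolding I1_def
    by (intro ii continuous_on_power cux)
  have hI2: "((\<lambda>y. (uxx y)\<^sup>2) has_integral I2) {0..L}" unfolding I2_def
    by (intro ii continuous_on_power cuxx)
  have hJ: "((\<lambda>y. ux y * uxx y) has_integral J) {0..L}" unfolding J_def
    by (intro ii continuous_on_mult cux cuxx)
  have hUX: "((\<lambda>y. u y * ux y) has_integral (- (u 0)\<^sup>2 / 2)) {0..L}"
    using ii[of 0 L "\<lambda>y. u y * ux y"] F2 continuous_on_mult[OF cu cux] by simp
  have hF1: "((\<lambda>y. (ux y)\<^sup>2 + u y * uxx y) has_integral (- \<gamma> * (u 0)\<^sup>2)) {0..L}"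
    using ii[of 0 L "\<lambda>y. (ux y)\<^sup>2 + u y * uxx y"] F1
      continuous_on_add[OF continuous_on_power[OF cux] continuous_on_mult[OF cu cuxx]] by simp
  have hUXX: "((\<lambda>y. u y * uxx y) has_integral (- \<gamma> * (u 0)\<^sup>2 - I1)) {0..L}"
    using has_integral_diff[OF hF1 hI1] by simp
  have hconst: "((\<lambda>y. \<xi>\<^sup>2) has_integral (L * \<xi>\<^sup>2)) {0..L}"
    using has_integral_const_real[of "\<xi>\<^sup>2" 0 L] L by simp
  show "0 \<le> I0" using has_integral_nonneg[OF hI0] by simp
  show "0 \<le> I1" using has_integral_nonneg[OF hI1] by simp
  show "0 \<le> I2" using has_integral_nonneg[OF hI2] by simp
  show "integral {0..L} (\<lambda>y. u y * ut y)
           \<le> - D * \<gamma> * (u 0)\<^sup>2 + a / 2 * (u 0)\<^sup>2 - D * I1 - g * I0 + \<kappa> / 2 * (I0 + L * \<xi>\<^sup>2)"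
  proof -
    let ?R = "\<lambda>y. D * (u y * uxx y) - a * (u y * ux y) - g * (u y)\<^sup>2 + \<kappa> / 2 * ((u y)\<^sup>2 + \<xi>\<^sup>2)"
    have hR: "(?R has_integral (D * (- \<gamma> * (u 0)\<^sup>2 - I1) - a * (- (u 0)\<^sup>2 / 2) - g * I0
                + \<kappa> / 2 * (I0 + L * \<xi>\<^sup>2))) {0..L}"
      by (intro has_integral_add has_integral_diff has_integral_mult_right hUXX hUX hI0 hconst)
    have "integral {0..L} (\<lambda>y. u y * ut y) \<le> integral {0..L} ?R"
    proof (rule integral_le_open)
      show "continuous_on {0..L} (\<lambda>y. u y * ut y)" by (intro continuous_on_mult cu cut)
      show "continuous_on {0..L} ?R"
        by (intro continuous_on_add continuous_on_diff continuous_on_mult continuous_on_power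
            continuous_on_const cu cux cuxx)
      fix y assume y: "0 < y" "y < L"
      have p: "\<bar>ut y - (D * uxx y - a * ux y - g * u y)\<bar> \<le> \<kappa> * \<xi>" by (rule pde[OF y])
      have "u y * ut y = u y * (D * uxx y - a * ux y - g * u y) + u y * (ut y - (D * uxx y - a * ux y - g * u y))"
        by (simp add: algebra_simps)
      also have "u y * (ut y - (D * uxx y - a * ux y - g * u y)) \<le> \<bar>u y\<bar> * (\<kappa> * \<xi>)"
      proof -
        have "u y * (ut y - (D * uxx y - a * ux y - g * u y)) \<le> \<bar>u y * (ut y - (D * uxx y - a * ux y - g * u y))\<bar>"
          by (rule abs_ge_self)
        also have "\<dots> = \<bar>u y\<bar> * \<bar>ut y - (D * uxx y - a * ux y - g * u y)\<bar>" by (rule abs_mult)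
        also have "\<dots> \<le> \<bar>u y\<bar> * (\<kappa> * \<xi>)" by (rule mult_left_mono[OF p abs_ge_zero])
        finally show ?thesis .
      qed
      also have "\<bar>u y\<bar> * (\<kappa> * \<xi>) \<le> \<kappa> / 2 * ((u y)\<^sup>2 + \<xi>\<^sup>2)"
      proof -
        have "2 * (\<bar>u y\<bar> * \<xi>) \<le> (u y)\<^sup>2 + \<xi>\<^sup>2"
          using sum_squares_bound[of "\<bar>u y\<bar>" \<xi>] by (simp add: power2_eq_square)
        then have "\<kappa> * (2 * (\<bar>u y\<bar> * \<xi>)) \<le> \<kappa> * ((u y)\<^sup>2 + \<xi>\<^sup>2)" by (rule mult_left_mono) (rule \<kappa>)
        then show ?thesis by (simp add: algebra_simps)
      qed
      finally show "u y * ut y \<le> ?R y" by (simp add: algebra_simps power2_eq_square)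
    qed
    also have "integral {0..L} ?R = D * (- \<gamma> * (u 0)\<^sup>2 - I1) - a * (- (u 0)\<^sup>2 / 2) - g * I0
                + \<kappa> / 2 * (I0 + L * \<xi>\<^sup>2)" by (rule integral_unique[OF hR])
    finally show ?thesis by (simp add: algebra_simps)
  qed
  show "- integral {0..L} (\<lambda>y. uxx y * ut y)
           \<le> - (3 * D / 4) * I2 + a\<^sup>2 / D * I1 - g * \<gamma> * (u 0)\<^sup>2 - g * I1 + \<kappa> / 2 * (I2 + L * \<xi>\<^sup>2)"
  proof -
    let ?R = "\<lambda>y. - (3 * D / 4) * (uxx y)\<^sup>2 + a\<^sup>2 / D * (ux y)\<^sup>2 + g * (u y * uxx y) + \<kappa> / 2 * ((uxx y)\<^sup>2 + \<xi>\<^sup>2)"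
    have hR: "(?R has_integral (- (3 * D / 4) * I2 + a\<^sup>2 / D * I1 + g * (- \<gamma> * (u 0)\<^sup>2 - I1)
                + \<kappa> / 2 * (I2 + L * \<xi>\<^sup>2))) {0..L}"
      by (intro has_integral_add has_integral_diff has_integral_mult_right hUXX hI1 hI2 hconst)
    have "integral {0..L} (\<lambda>y. - (uxx y * ut y)) \<le> integral {0..L} ?R"
    proof (rule integral_le_open)
      show "continuous_on {0..L} (\<lambda>y. - (uxx y * ut y))" by (intro continuous_on_minus continuous_on_mult cuxx cut)
      show "continuous_on {0..L} ?R"
        by (intro continuous_on_add continuous_on_diff continuous_on_mult continuous_on_power
            continuous_on_const cu cux cuxx)
      fix y assume y: "0 < y" "y < L"
      have p: "\<bar>ut y - (D * uxx y - a * ux y - g * u y)\<bar> \<le> \<kappa> * \<xi>" by (rule pde[OF y])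
      have e: "- (uxx y * ut y) = - D * (uxx y)\<^sup>2 + a * (uxx y * ux y) + g * (u y * uxx y)
                 - uxx y * (ut y - (D * uxx y - a * ux y - g * u y))"
        by (simp add: algebra_simps power2_eq_square)
      have b1: "- (uxx y * (ut y - (D * uxx y - a * ux y - g * u y))) \<le> \<bar>uxx y\<bar> * (\<kappa> * \<xi>)"
      proof -
        have "- (uxx y * (ut y - (D * uxx y - a * ux y - g * u y))) \<le> \<bar>uxx y * (ut y - (D * uxx y - a * ux y - g * u y))\<bar>"
          by (rule abs_ge_minus_self)
        also have "\<dots> = \<bar>uxx y\<bar> * \<bar>ut y - (D * uxx y - a * ux y - g * u y)\<bar>" by (rule abs_mult)
        also have "\<dots> \<le> \<bar>uxx y\<bar> * (\<kappa> * \<xi>)" by (rule mult_left_mono[OF p abs_ge_zero])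
        finally show ?thesis .
      qed
      have b2: "\<bar>uxx y\<bar> * (\<kappa> * \<xi>) \<le> \<kappa> / 2 * ((uxx y)\<^sup>2 + \<xi>\<^sup>2)"
      proof -
        have "2 * (\<bar>uxx y\<bar> * \<xi>) \<le> (uxx y)\<^sup>2 + \<xi>\<^sup>2"
          using sum_squares_bound[of "\<bar>uxx y\<bar>" \<xi>] by (simp add: power2_eq_square)
        then have "\<kappa> * (2 * (\<bar>uxx y\<bar> * \<xi>)) \<le> \<kappa> * ((uxx y)\<^sup>2 + \<xi>\<^sup>2)" by (rule mult_left_mono) (rule \<kappa>)
        then show ?thesis by (simp add: algebra_simps)
      qed
      have b3: "a * (uxx y * ux y) \<le> D / 4 * (uxx y)\<^sup>2 + a\<^sup>2 / D * (ux y)\<^sup>2"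
      proof -
        have "0 \<le> (D / 2 * uxx y - a * ux y)\<^sup>2 / D" using D by simp
        also have "(D / 2 * uxx y - a * ux y)\<^sup>2 / D = D / 4 * (uxx y)\<^sup>2 + a\<^sup>2 / D * (ux y)\<^sup>2 - a * (uxx y * ux y)"
          using D by (simp add: power2_eq_square field_simps)
        finally show ?thesis by simp
      qed
      show "- (uxx y * ut y) \<le> ?R y" unfolding e using b1 b2 b3 by (simp add: algebra_simps)
    qed
    also have "integral {0..L} ?R = - (3 * D / 4) * I2 + a\<^sup>2 / D * I1 + g * (- \<gamma> * (u 0)\<^sup>2 - I1)
                + \<kappa> / 2 * (I2 + L * \<xi>\<^sup>2)" by (rule integral_unique[OF hR])
    finally show ?thesis by (simp add: algebra_simps)
  qed
  show "(ux L)\<^sup>2 = \<gamma>\<^sup>2 * (u 0)\<^sup>2 + 2 * J"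
    using F3 bc0 unfolding J_def by (simp add: power_mult_distrib)
  show "\<bar>J\<bar> \<le> (I1 + I2) / 2"
  proof -
    have hS: "((\<lambda>y. ((ux y)\<^sup>2 + (uxx y)\<^sup>2) / 2) has_integral ((I1 + I2) / 2)) {0..L}"
      using has_integral_add[OF hI1 hI2] by (rule has_integral_divide)
    have c1: "continuous_on {0..L} (\<lambda>y. ((ux y)\<^sup>2 + (uxx y)\<^sup>2) / 2)"
      by (intro continuous_on_divide continuous_on_add continuous_on_power continuous_on_const cux cuxx) auto
    have c2: "continuous_on {0..L} (\<lambda>y. ux y * uxx y)" by (intro continuous_on_mult cux cuxx)
    have "J \<le> (I1 + I2) / 2"
    proof -
      have "integral {0..L} (\<lambda>y. ux y * uxx y) \<le> integral {0..L} (\<lambda>y. ((ux y)\<^sup>2 + (uxx y)\<^sup>2) / 2)"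
      proof (rule integral_le_open[OF c2 c1])
        fix y
        have "0 \<le> (ux y - uxx y)\<^sup>2" by simp
        then show "ux y * uxx y \<le> ((ux y)\<^sup>2 + (uxx y)\<^sup>2) / 2"
          by (simp add: power2_eq_square algebra_simps)
      qed
      then show ?thesis unfolding J_def integral_unique[OF hS] .
    qed
    moreover have "- J \<le> (I1 + I2) / 2"
    proof -
      have "integral {0..L} (\<lambda>y. - (ux y * uxx y)) \<le> integral {0..L} (\<lambda>y. ((ux y)\<^sup>2 + (uxx y)\<^sup>2) / 2)"
      proof (rule integral_le_open[OF continuous_on_minus[OF c2] c1])
        fix y
        have "0 \<le> (ux y + uxx y)\<^sup>2" by simp
        then show "- (ux y * uxx y) \<le> ((ux y)\<^sup>2 + (uxx y)\<^sup>2) / 2"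
          by (simp add: power2_eq_square algebra_simps)
      qed
      then show ?thesis unfolding J_def integral_unique[OF hS] by simp
    qed
    ultimately show ?thesis by simp
  qed
qed


lemma norm_mv_le: "norm ((M::real^'n^'m) *v x) \<le> (\<Sum>i\<in>UNIV. \<Sum>j\<in>UNIV. \<bar>M$i$j\<bar>) * norm x"
proof -
  have "norm (M *v x) \<le> (\<Sum>i\<in>UNIV. \<bar>(M *v x)$i\<bar>)" by (rule norm_le_l1_cart)
  also have "\<dots> \<le> (\<Sum>i\<in>UNIV. (\<Sum>j\<in>UNIV. \<bar>M$i$j\<bar>) * norm x)"
  proof (rule sum_mono)
    fix i
    have "\<bar>(M *v x)$i\<bar> = \<bar>\<Sum>j\<in>UNIV. M$i$j * x$j\<bar>" by (simp add: matrix_vector_mult_def)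
    also have "\<dots> \<le> (\<Sum>j\<in>UNIV. \<bar>M$i$j * x$j\<bar>)" by (rule sum_abs)
    also have "\<dots> \<le> (\<Sum>j\<in>UNIV. \<bar>M$i$j\<bar> * norm x)"
      by (rule sum_mono) (simp add: abs_mult mult_left_mono component_le_norm_cart)
    also have "\<dots> = (\<Sum>j\<in>UNIV. \<bar>M$i$j\<bar>) * norm x" by (simp add: sum_distrib_right)
    finally show "\<bar>(M *v x)$i\<bar> \<le> (\<Sum>j\<in>UNIV. \<bar>M$i$j\<bar>) * norm x" .
  qed
  also have "\<dots> = (\<Sum>i\<in>UNIV. \<Sum>j\<in>UNIV. \<bar>M$i$j\<bar>) * norm x" by (simp add: sum_distrib_right)
  finally show ?thesis .
qed

lemma quad_upper:
  obtains p1 where "p1 > 0" "\<And>x. x \<bullet> ((P::real^'n^'n) *v x) \<le> p1 * (norm x)\<^sup>2"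
    "\<And>x. norm (P *v x) \<le> p1 * norm x"
proof -
  define p1 where "p1 = (\<Sum>i\<in>UNIV. \<Sum>j\<in>UNIV. \<bar>P$i$j\<bar>) + 1"
  have s0: "0 \<le> (\<Sum>i\<in>UNIV. \<Sum>j\<in>UNIV. \<bar>P$i$j\<bar>)" by (intro sum_nonneg) auto
  have n: "norm (P *v x) \<le> p1 * norm x" for x
  proof -
    have "norm (P *v x) \<le> (\<Sum>i\<in>UNIV. \<Sum>j\<in>UNIV. \<bar>P$i$j\<bar>) * norm x" by (rule norm_mv_le)
    also have "\<dots> \<le> p1 * norm x" unfolding p1_def by (intro mult_right_mono) auto
    finally show ?thesis .
  qed
  show ?thesis
  proof (rule that)
    show "p1 > 0" unfolding p1_def using s0 by simp
    fix x :: "real^'n"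
    have "x \<bullet> (P *v x) \<le> norm x * norm (P *v x)" by (rule norm_cauchy_schwarz)
    also have "\<dots> \<le> norm x * (p1 * norm x)" by (rule mult_left_mono[OF n norm_ge_zero])
    finally show "x \<bullet> (P *v x) \<le> p1 * (norm x)\<^sup>2" by (simp add: power2_eq_square mult_ac)
    show "norm (P *v x) \<le> p1 * norm x" by (rule n)
  qed
qed

lemma quad_lower:
  assumes "pos_def (P::real^'n^'n)"
  obtains p0 where "p0 > 0" "\<And>x. p0 * (norm x)\<^sup>2 \<le> x \<bullet> (P *v x)"
proof -
  let ?f = "\<lambda>x::real^'n. x \<bullet> (P *v x)"
  have cf: "continuous_on (sphere 0 1) ?f"
    by (intro continuous_on_inner continuous_on_id matrix_vector_mult_linear_continuous_on)
  have ne: "sphere (0::real^'n) 1 \<noteq> {}"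
  proof -
    obtain i :: 'n where True by simp
    have "axis i (1::real) \<in> sphere 0 1" by simp
    then show ?thesis by blast
  qed
  obtain x0 where x0: "x0 \<in> sphere 0 1" "\<forall>y\<in>sphere 0 1. ?f x0 \<le> ?f y"
    using continuous_attains_inf[OF compact_sphere ne cf] by blast
  have x0nz: "x0 \<noteq> 0" using x0(1) by auto
  have pos: "?f x0 > 0" using assms x0nz unfolding pos_def_def by blast
  show ?thesis
  proof (rule that[of "?f x0"])
    show "?f x0 > 0" by (rule pos)
    fix x :: "real^'n"
    show "?f x0 * (norm x)\<^sup>2 \<le> ?f x"
    proof (cases "x = 0")
      case True then show ?thesis by simp
    next
      case False
      define y where "y = (1 / norm x) *\<^sub>R x"
      have y: "y \<in> sphere 0 1" unfolding y_def using False by simp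
      have xy: "x = norm x *\<^sub>R y" unfolding y_def using False by simp
      have "?f x = (norm x)\<^sup>2 * ?f y"
        by (subst (1 2) xy) (simp add: matrix_vector_mult_scaleR power2_eq_square)
      moreover have "?f x0 \<le> ?f y" using x0(2) y by blast
      moreover have "?f x0 * (norm x)\<^sup>2 \<le> ?f y * (norm x)\<^sup>2"
        using \<open>?f x0 \<le> ?f y\<close> by (rule mult_right_mono) simp
      ultimately show ?thesis by (simp add: mult.commute)
    qed
  qed
qed

lemma quad_deriv:
  fixes X :: "real \<Rightarrow> real^'n"
  assumes "(X has_vector_derivative X') (at t within S)" and "transpose P = P"
  shows "((\<lambda>t. X t \<bullet> (P *v X t)) has_real_derivative 2 * ((P *v X t) \<bullet> X')) (at t within S)"
proof -
  have d1: "((\<lambda>t. P *v X t) has_vector_derivative P *v X') (at t within S)"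
    by (rule bounded_linear.has_vector_derivative[OF matrix_vector_mul_bounded_linear assms(1)])
  have "((\<lambda>t. X t \<bullet> (P *v X t)) has_derivative
          (\<lambda>h. X t \<bullet> (h *\<^sub>R (P *v X')) + (h *\<^sub>R X') \<bullet> (P *v X t))) (at t within S)"
    using bounded_bilinear.FDERIV[OF bounded_bilinear_inner assms(1)[unfolded has_vector_derivative_def]
        d1[unfolded has_vector_derivative_def]] by simp
  moreover have "X t \<bullet> (P *v X') = (P *v X t) \<bullet> X'"
  proof -
    have "X t \<bullet> (P *v X') = (X t v* P) \<bullet> X'" by (simp add: dot_lmul_matrix)
    also have "X t v* P = transpose P *v X t" by simp
    finally show ?thesis using assms(2) by simp
  qed
  ultimately show ?thesis
    unfolding has_field_derivative_def
    by (elim has_derivative_eq_rhs) (simp add: fun_eq_iff inner_commute algebra_simps)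
qed

lemma lyap_identity:
  fixes G P Q :: "real^'n^'n"
  assumes "transpose G ** P + P ** G = - Q" "transpose P = P"
  shows "2 * ((P *v x) \<bullet> (G *v x)) = - (x \<bullet> (Q *v x))"
proof -
  have "x \<bullet> ((transpose G ** P + P ** G) *v x) = x \<bullet> (transpose G *v (P *v x)) + x \<bullet> (P *v (G *v x))"
    by (simp add: matrix_vector_mult_add_rdistrib matrix_vector_mul_assoc inner_add_right)
  also have "x \<bullet> (transpose G *v (P *v x)) = (G *v x) \<bullet> (P *v x)"
  proof -
    have "x \<bullet> (transpose G *v (P *v x)) = x \<bullet> ((P *v x) v* G)" by simp
    also have "\<dots> = ((P *v x) v* G) \<bullet> x" by (rule inner_commute)
    also have "\<dots> = (P *v x) \<bullet> (G *v x)" by (rule dot_lmul_matrix)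
    also have "\<dots> = (G *v x) \<bullet> (P *v x)" by (rule inner_commute)
    finally show ?thesis .
  qed
  also have "x \<bullet> (P *v (G *v x)) = (P *v x) \<bullet> (G *v x)"
  proof -
    have "x \<bullet> (P *v (G *v x)) = (x v* P) \<bullet> (G *v x)" by (simp add: dot_lmul_matrix)
    also have "x v* P = transpose P *v x" by simp
    finally show ?thesis using assms(2) by simp
  qed
  finally have "x \<bullet> ((transpose G ** P + P ** G) *v x) = 2 * ((P *v x) \<bullet> (G *v x))"
    by (simp add: inner_commute)
  moreover have "(- Q) *v x = - (Q *v x)"
    by (simp add: matrix_vector_mult_def vec_eq_iff sum_negf)
  ultimately show ?thesis using assms(1) by simp
qed


lemma deriv_within_local:
  fixes f :: "real \<Rightarrow> real"
  assumes "(f has_real_derivative Df) (at t within S)" "d > 0" "\<And>s. s \<in> T \<Longrightarrow> \<bar>s - t\<bar> < d \<Longrightarrow> s \<in> S"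
  shows "(f has_real_derivative Df) (at t within T)"
proof (rule real_deriv_crit)
  fix e :: real assume e: "e > 0"
  obtain d1 where d1: "d1 > 0" "\<forall>s\<in>S. \<bar>s - t\<bar> < d1 \<longrightarrow> \<bar>f s - f t - (s - t) * Df\<bar> \<le> e * \<bar>s - t\<bar>"
    using real_deriv_critD[OF assms(1) e] by blast
  show "\<exists>d>0. \<forall>s\<in>T. \<bar>s - t\<bar> < d \<longrightarrow> \<bar>f s - f t - (s - t) * Df\<bar> \<le> e * \<bar>s - t\<bar>"
    using d1 assms(2,3) by (intro exI[of _ "min d d1"]) auto
qed

lemma deriv_unique_Ici:
  fixes f :: "real \<Rightarrow> real"
  assumes "(f has_real_derivative D1) (at t within {0..})" "(f has_real_derivative D2) (at t within {0..})"
    and "0 \<le> t"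
  shows "D1 = D2"
proof (rule ccontr)
  assume ne: "D1 \<noteq> D2"
  define e where "e = \<bar>D1 - D2\<bar> / 4"
  have e: "e > 0" using ne unfolding e_def by simp
  obtain da where da: "da > 0" "\<forall>s\<in>{0..}. \<bar>s - t\<bar> < da \<longrightarrow> \<bar>f s - f t - (s - t) * D1\<bar> \<le> e * \<bar>s - t\<bar>"
    using real_deriv_critD[OF assms(1) e] by blast
  obtain db where db: "db > 0" "\<forall>s\<in>{0..}. \<bar>s - t\<bar> < db \<longrightarrow> \<bar>f s - f t - (s - t) * D2\<bar> \<le> e * \<bar>s - t\<bar>"
    using real_deriv_critD[OF assms(2) e] by blast
  define h where "h = min da db / 2"
  have h: "h > 0" "h < da" "h < db" using da db unfolding h_def by auto
  have s0: "t + h \<in> {0..}" using assms(3) h by simp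
  have ha: "\<bar>(t + h) - t\<bar> < da" and hb: "\<bar>(t + h) - t\<bar> < db" using h by auto
  have "\<bar>f (t + h) - f t - h * D1\<bar> \<le> e * h" using da(2)[rule_format, OF s0 ha] h by simp
  moreover have "\<bar>f (t + h) - f t - h * D2\<bar> \<le> e * h" using db(2)[rule_format, OF s0 hb] h by simp
  ultimately have "\<bar>h * (D1 - D2)\<bar> \<le> 2 * e * h" by (simp add: algebra_simps abs_le_iff) 
  then have "h * \<bar>D1 - D2\<bar> \<le> h * (2 * e)" using h by (simp add: abs_mult mult_ac)
  then have "\<bar>D1 - D2\<bar> \<le> 2 * e" using h by simp
  then show False using e unfolding e_def by simp
qed

lemma cont_pair_mult:
  assumes "continuous_on S (\<lambda>(x, s). f x s)" "continuous_on S (\<lambda>(x, s). g x s)"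
  shows "continuous_on S (\<lambda>(x, s). (f x s :: real) * g x s)"
proof -
  have "continuous_on S (\<lambda>p. (\<lambda>(x, s). f x s) p * (\<lambda>(x, s). g x s) p)"
    by (rule continuous_on_mult[OF assms])
  then show ?thesis by (simp add: case_prod_beta')
qed

lemma cont_pair_cmult:
  assumes "continuous_on S (\<lambda>(x, s). f x s)"
  shows "continuous_on S (\<lambda>(x, s). (c::real) * f x s)"
proof -
  have "continuous_on S (\<lambda>p. c * (\<lambda>(x, s). f x s) p)"
    by (rule continuous_on_mult[OF continuous_on_const assms])
  then show ?thesis by (simp add: case_prod_beta')
qed


locale sol =
  fixes D a g rg ls \<gamma> :: real and A :: "real^2^2" and B C K :: "real^2"
    and w wx wxx wt wxt :: "real \<Rightarrow> real \<Rightarrow> real" and z1 z2 :: "real \<Rightarrow> real"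
  assumes ts: "target_solution D a g rg ls \<gamma> A B C K w wx wxx wt wxt z1 z2"
    and hA2: "\<And>x. ((A + outer B K) *v x) $ 2 = rg * x $ 1"
    and hB2: "B $ 2 = 0"
begin

lemma cw: "continuous_on {(x, s). 0 \<le> s \<and> 0 \<le> x \<and> x \<le> ls + z2 s} (\<lambda>(x, s). w x s)"
  and cwx: "continuous_on {(x, s). 0 \<le> s \<and> 0 \<le> x \<and> x \<le> ls + z2 s} (\<lambda>(x, s). wx x s)"
  and cwxx: "continuous_on {(x, s). 0 \<le> s \<and> 0 \<le> x \<and> x \<le> ls + z2 s} (\<lambda>(x, s). wxx x s)"
  and cwt: "continuous_on {(x, s). 0 \<le> s \<and> 0 \<le> x \<and> x \<le> ls + z2 s} (\<lambda>(x, s). wt x s)"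
  and cwxt: "continuous_on {(x, s). 0 \<le> s \<and> 0 \<le> x \<and> x \<le> ls + z2 s} (\<lambda>(x, s). wxt x s)"
  using ts unfolding target_solution_def Let_def dom_cl_def by auto

lemma dw: "0 \<le> s \<Longrightarrow> 0 \<le> x \<Longrightarrow> x \<le> ls + z2 s \<Longrightarrow>
    ((\<lambda>y. w y s) has_real_derivative wx x s) (at x within {0..ls + z2 s})"
  and dwx: "0 \<le> s \<Longrightarrow> 0 \<le> x \<Longrightarrow> x \<le> ls + z2 s \<Longrightarrow>
    ((\<lambda>y. wx y s) has_real_derivative wxx x s) (at x within {0..ls + z2 s})"
  and dwt: "0 \<le> s \<Longrightarrow> 0 \<le> x \<Longrightarrow> x \<le> ls + z2 s \<Longrightarrow>
    ((\<lambda>r. w x r) has_real_derivative wt x s) (at s within {r. 0 \<le> r \<and> x \<le> ls + z2 r})"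
  and dwxt: "0 \<le> s \<Longrightarrow> 0 \<le> x \<Longrightarrow> x \<le> ls + z2 s \<Longrightarrow>
    ((\<lambda>r. wx x r) has_real_derivative wxt x s) (at s within {r. 0 \<le> r \<and> x \<le> ls + z2 r})"
  using ts unfolding target_solution_def Let_def dom_cl_def by auto

lemma pde: "0 \<le> s \<Longrightarrow> 0 < x \<Longrightarrow> x < ls + z2 s \<Longrightarrow>
    wt x s = D * wxx x s - a * wx x s - g * w x s
             - rg * z1 s * Fterm D a g A B C K (ls + z2 s) x (vector [z1 s, z2 s])"
  using ts unfolding target_solution_def Let_def dom_cl_def by auto

lemma bc0: "0 \<le> s \<Longrightarrow> wx 0 s = \<gamma> * w 0 s"
  and bcL: "0 \<le> s \<Longrightarrow> w (ls + z2 s) s = 0"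
  using ts unfolding target_solution_def Let_def dom_cl_def by auto

lemma ode: "0 \<le> s \<Longrightarrow> ((\<lambda>t. vector [z1 t, z2 t] :: real^2) has_vector_derivative
    ((A + outer B K) *v vector [z1 s, z2 s] + wx (ls + z2 s) s *\<^sub>R B)) (at s within {0..})"
  using ts unfolding target_solution_def Let_def dom_cl_def by auto

lemma X_cont: "continuous_on {0..} (\<lambda>t. vector [z1 t, z2 t] :: real^2)"
  unfolding continuous_on_eq_continuous_within
proof
  fix s :: real assume "s \<in> {0..}"
  then show "continuous (at s within {0..}) (\<lambda>t. vector [z1 t, z2 t] :: real^2)"
    using has_vector_derivative_continuous[OF ode] by simp
qed

lemma z2_deriv: "0 \<le> s \<Longrightarrow> (z2 has_real_derivative rg * z1 s) (at s within {0..})"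
proof -
  assume s: "0 \<le> s"
  have "((\<lambda>t. (vector [z1 t, z2 t] :: real^2) $ 2) has_vector_derivative
    ((A + outer B K) *v vector [z1 s, z2 s] + wx (ls + z2 s) s *\<^sub>R B) $ 2) (at s within {0..})"
    by (rule bounded_linear.has_vector_derivative[OF bounded_linear_vec_nth ode[OF s]])
  then show ?thesis
    by (simp add: hA2 hB2 has_real_derivative_iff_has_vector_derivative)
qed

lemma l_deriv: "0 \<le> s \<Longrightarrow> ((\<lambda>s. ls + z2 s) has_real_derivative rg * z1 s) (at s within {0..})"
  using DERIV_add[OF DERIV_const z2_deriv] by simp

lemma l_cont: "continuous_on {0..} (\<lambda>s. ls + z2 s)"
  by (rule DERIV_continuous_on[OF l_deriv]) simp

lemma z1_cont: "continuous_on {0..} z1"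
proof -
  have "continuous_on {0..} (\<lambda>t. (vector [z1 t, z2 t] :: real^2) $ 1)"
    by (rule continuous_on_compose2[OF linear_continuous_on[OF bounded_linear_vec_nth] X_cont]) auto
  then show ?thesis by simp
qed

lemma l_near:
  assumes "0 \<le> t" "x0 < ls + z2 t"
  obtains d where "d > 0" "\<And>s. s \<in> {0..} \<Longrightarrow> \<bar>s - t\<bar> < d \<Longrightarrow> x0 < ls + z2 s"
proof -
  obtain d where d: "d > 0" "\<forall>s\<in>{0..}. dist s t < d \<longrightarrow> dist (ls + z2 s) (ls + z2 t) < ls + z2 t - x0"
    using l_cont assms unfolding continuous_on_iff by (metis atLeast_iff diff_gt_0_iff_gt)
  show ?thesis
    by (rule that[OF d(1)]) (use d(2) in \<open>fastforce simp: dist_real_def\<close>)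
qed

lemma wt_formula:
  assumes t: "0 \<le> t" and x0: "0 \<le> x0" "x0 < ls + z2 t"
  shows "wt x0 t = - (rg * z1 t * wx (ls + z2 t) t) - integral {x0..ls + z2 t} (\<lambda>y. wxt y t)"
proof -
  have Lb: "((\<lambda>s. integral {x0..ls + z2 s} (\<lambda>y. wx y s)) has_real_derivative
      (rg * z1 t * wx (ls + z2 t) t + integral {x0..ls + z2 t} (\<lambda>y. wxt y t))) (at t within {0..})"
    by (rule leibniz_moving[where l="\<lambda>s. ls + z2 s", OF l_cont l_deriv[OF t] t x0 cwx cwxt dwxt])
  obtain d where d: "d > 0" "\<And>s. s \<in> {0..} \<Longrightarrow> \<bar>s - t\<bar> < d \<Longrightarrow> x0 < ls + z2 s"
    using l_near[OF t x0(2)] by blast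
  have eq: "integral {x0..ls + z2 s} (\<lambda>y. wx y s) = - w x0 s" if s: "s \<in> {0..}" "dist s t < d" for s
  proof -
    have s0: "0 \<le> s" using s by simp
    have xs: "x0 < ls + z2 s" using d(2) s by (simp add: dist_real_def)
    have "integral {x0..ls + z2 s} (\<lambda>y. wx y s) = w (ls + z2 s) s - w x0 s"
    proof (rule ftc_real)
      show "x0 \<le> ls + z2 s" using xs by simp
      fix y assume y: "y \<in> {x0..ls + z2 s}"
      show "((\<lambda>y. w y s) has_real_derivative wx y s) (at y within {x0..ls + z2 s})"
        by (rule DERIV_subset[OF dw]) (use y x0 s0 in auto)
    qed
    then show ?thesis using bcL[OF s0] by simp
  qed
  have D1: "((\<lambda>s. - w x0 s) has_real_derivative
      (rg * z1 t * wx (ls + z2 t) t + integral {x0..ls + z2 t} (\<lambda>y. wxt y t))) (at t within {0..})"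
    by (rule has_field_derivative_transform_within[OF Lb d(1)]) (use t eq in auto)
  have "((\<lambda>s. w x0 s) has_real_derivative wt x0 t) (at t within {0..})"
  proof (rule deriv_within_local[OF dwt[OF t x0(1)] d(1)])
    show "x0 \<le> ls + z2 t" using x0 by simp
    fix s assume "s \<in> {0..}" "\<bar>s - t\<bar> < d"
    then show "s \<in> {r. 0 \<le> r \<and> x0 \<le> ls + z2 r}" using d(2) by force
  qed
  then have D2: "((\<lambda>s. - w x0 s) has_real_derivative - wt x0 t) (at t within {0..})"
    by (rule DERIV_minus)
  have "- wt x0 t = rg * z1 t * wx (ls + z2 t) t + integral {x0..ls + z2 t} (\<lambda>y. wxt y t)"
    by (rule deriv_unique_Ici[OF D2 D1 t])
  then show ?thesis by simp
qed

lemma ibp: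
  assumes t: "0 \<le> t" and L: "0 < ls + z2 t"
  shows "integral {0..ls + z2 t} (\<lambda>y. wx y t * wxt y t)
       = - (rg * z1 t) * (wx (ls + z2 t) t)\<^sup>2 - \<gamma> * w 0 t * wt 0 t
         - integral {0..ls + z2 t} (\<lambda>y. wxx y t * wt y t)"
proof -
  define L where "L = ls + z2 t"
  define Wf where "Wf y = wt 0 t + integral {0..y} (\<lambda>z. wxt z t)" for y
  have L0: "0 \<le> L" "0 < L" using L unfolding L_def by auto
  have cs: "continuous_on {0..L} (\<lambda>y. f y t)"
    if "continuous_on {(x, s). 0 \<le> s \<and> 0 \<le> x \<and> x \<le> ls + z2 s} (\<lambda>(x, s). f x s)"
    for f :: "real \<Rightarrow> real \<Rightarrow> real"
    using slice_cont[where l="\<lambda>s. ls + z2 s" and f=f and s=t and a=0 and b=L] that t L_def by simp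
  have cwxt_s: "continuous_on {0..L} (\<lambda>z. wxt z t)" by (rule cs[OF cwxt])
  have cwx_s: "continuous_on {0..L} (\<lambda>z. wx z t)" by (rule cs[OF cwx])
  have cwxx_s: "continuous_on {0..L} (\<lambda>z. wxx z t)" by (rule cs[OF cwxx])
  have cwt_s: "continuous_on {0..L} (\<lambda>z. wt z t)" by (rule cs[OF cwt])
  have dW: "(Wf has_real_derivative wxt y t) (at y within {0..L})" if y: "y \<in> {0..L}" for y
    unfolding Wf_def using DERIV_add[OF DERIV_const integral_has_real_derivative[OF cwxt_s y]] by simp
  have cW: "continuous_on {0..L} Wf" by (rule DERIV_continuous_on[OF dW])
  have wt0: "wt 0 t = - (rg * z1 t * wx L t) - integral {0..L} (\<lambda>y. wxt y t)"
    using wt_formula[OF t _ L] unfolding L_def by simp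
  have Wy: "Wf y = wt y t" if y: "0 \<le> y" "y < L" for y
  proof -
    have "wt y t = - (rg * z1 t * wx L t) - integral {y..L} (\<lambda>y. wxt y t)"
      using wt_formula[OF t y(1)] y(2) unfolding L_def by simp
    moreover have "integral {0..y} (\<lambda>y. wxt y t) + integral {y..L} (\<lambda>y. wxt y t) = integral {0..L} (\<lambda>y. wxt y t)"
      by (rule Henstock_Kurzweil_Integration.integral_combine) (use y integrable_continuous_real[OF cwxt_s] in auto)
    ultimately show ?thesis unfolding Wf_def using wt0 by simp
  qed
  have WL: "Wf L = - (rg * z1 t * wx L t)" unfolding Wf_def using wt0 by simp
  have W0: "Wf 0 = wt 0 t" unfolding Wf_def by simp
  have ftc: "integral {0..L} (\<lambda>y. wxx y t * Wf y + wx y t * wxt y t) = wx L t * Wf L - wx 0 t * Wf 0"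
  proof (rule ftc_real[OF L0(1)])
    fix y assume y: "y \<in> {0..L}"
    have "((\<lambda>y. wx y t) has_real_derivative wxx y t) (at y within {0..L})"
      using dwx[OF t] y unfolding L_def by auto
    from DERIV_mult[OF this dW[OF y]]
    show "((\<lambda>y. wx y t * Wf y) has_real_derivative wxx y t * Wf y + wx y t * wxt y t) (at y within {0..L})"
      by (simp add: mult.commute)
  qed
  have split: "integral {0..L} (\<lambda>y. wxx y t * Wf y + wx y t * wxt y t)
      = integral {0..L} (\<lambda>y. wxx y t * Wf y) + integral {0..L} (\<lambda>y. wx y t * wxt y t)"
    by (intro integral_add integrable_continuous_real continuous_on_mult cwxx_s cW cwx_s cwxt_s)
  have same: "integral {0..L} (\<lambda>y. wxx y t * Wf y) = integral {0..L} (\<lambda>y. wxx y t * wt y t)"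
  proof -
    have "integral {0<..<L} (\<lambda>y. wxx y t * Wf y) = integral {0<..<L} (\<lambda>y. wxx y t * wt y t)"
      by (rule integral_cong) (use Wy in auto)
    then show ?thesis by (simp add: integral_open_interval_real)
  qed
  show ?thesis
    using ftc split same WL W0 bc0[OF t] unfolding L_def[symmetric]
    by (simp add: power2_eq_square algebra_simps)
qed

lemma V_deriv:
  fixes d1 d2 :: real and P :: "real^2^2"
  assumes t: "0 \<le> t" and L: "0 < ls + z2 t" and Ps: "transpose P = P"
  shows "(lyapV ls \<gamma> d1 d2 P w wx z1 z2 has_real_derivative
     d1 / 2 * (2 * integral {0..ls + z2 t} (\<lambda>y. w y t * wt y t))
     + 1 / 2 * (rg * z1 t * (wx (ls + z2 t) t)\<^sup>2 + 2 * integral {0..ls + z2 t} (\<lambda>y. wx y t * wxt y t))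
     + \<gamma> / 2 * (2 * (w 0 t * wt 0 t))
     + d2 * (2 * ((P *v vector [z1 t, z2 t]) \<bullet> ((A + outer B K) *v vector [z1 t, z2 t] + wx (ls + z2 t) t *\<^sub>R B))))
     (at t within {0..})"
proof -
  let ?\<Omega> = "{(x, s). 0 \<le> s \<and> 0 \<le> x \<and> x \<le> ls + z2 s}"
  have eqV: "lyapV ls \<gamma> d1 d2 P w wx z1 z2 = (\<lambda>s. d1 / 2 * integral {0..ls + z2 s} (\<lambda>x. (w x s)\<^sup>2)
       + 1 / 2 * integral {0..ls + z2 s} (\<lambda>x. (wx x s)\<^sup>2) + \<gamma> / 2 * (w 0 s)\<^sup>2
       + d2 * (vector [z1 s, z2 s] \<bullet> (P *v vector [z1 s, z2 s])))"
    by (rule ext) (simp add: lyapV_def Let_def)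
  have c2: "continuous_on ?\<Omega> (\<lambda>(x, s). (f x s)\<^sup>2)" if "continuous_on ?\<Omega> (\<lambda>(x, s). f x s)"
    for f :: "real \<Rightarrow> real \<Rightarrow> real"
    using cont_pair_mult[OF that that] by (simp add: power2_eq_square)
  have c3: "continuous_on ?\<Omega> (\<lambda>(x, s). 2 * (f x s * h x s))"
    if "continuous_on ?\<Omega> (\<lambda>(x, s). f x s)" "continuous_on ?\<Omega> (\<lambda>(x, s). h x s)"
    for f h :: "real \<Rightarrow> real \<Rightarrow> real"
    by (rule cont_pair_cmult[OF cont_pair_mult[OF that]])
  have d2f: "((\<lambda>r. (f x r)\<^sup>2) has_real_derivative 2 * (f x s * h x s)) (at s within S)"
    if "((\<lambda>r. f x r) has_real_derivative h x s) (at s within S)"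
    for f h :: "real \<Rightarrow> real \<Rightarrow> real" and x s :: real and S
    using DERIV_mult[OF that that] unfolding power2_eq_square by (simp add: algebra_simps)
  have E1: "((\<lambda>s. integral {0..ls + z2 s} (\<lambda>x. (w x s)\<^sup>2)) has_real_derivative
      rg * z1 t * (w (ls + z2 t) t)\<^sup>2 + integral {0..ls + z2 t} (\<lambda>y. 2 * (w y t * wt y t))) (at t within {0..})"
    by (rule leibniz_moving[where l="\<lambda>s. ls + z2 s" and f="\<lambda>x s. (w x s)\<^sup>2",
          OF l_cont l_deriv[OF t] t _ L c2[OF cw] c3[OF cw cwt] d2f[where f=w and h=wt, OF dwt]]) auto
  have E2: "((\<lambda>s. integral {0..ls + z2 s} (\<lambda>x. (wx x s)\<^sup>2)) has_real_derivative
      rg * z1 t * (wx (ls + z2 t) t)\<^sup>2 + integral {0..ls + z2 t} (\<lambda>y. 2 * (wx y t * wxt y t))) (at t within {0..})"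
    by (rule leibniz_moving[where l="\<lambda>s. ls + z2 s" and f="\<lambda>x s. (wx x s)\<^sup>2",
          OF l_cont l_deriv[OF t] t _ L c2[OF cwx] c3[OF cwx cwxt] d2f[where f=wx and h=wxt, OF dwxt]]) auto
  obtain d where d: "d > 0" "\<And>s. s \<in> {0..} \<Longrightarrow> \<bar>s - t\<bar> < d \<Longrightarrow> 0 < ls + z2 s"
    using l_near[OF t L] by blast
  have E3: "((\<lambda>s. (w 0 s)\<^sup>2) has_real_derivative 2 * (w 0 t * wt 0 t)) (at t within {0..})"
  proof (rule deriv_within_local[OF d2f[where f=w and h=wt and x=0, OF dwt[OF t]] d(1)])
    show "0 \<le> ls + z2 t" using L by simp
  next
    fix s assume "s \<in> {0..}" "\<bar>s - t\<bar> < d"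
    then show "s \<in> {r. 0 \<le> r \<and> 0 \<le> ls + z2 r}" using d(2)[of s] by force
  qed simp
  have E4: "((\<lambda>s. vector [z1 s, z2 s] \<bullet> (P *v vector [z1 s, z2 s])) has_real_derivative
      2 * ((P *v vector [z1 t, z2 t]) \<bullet> ((A + outer B K) *v vector [z1 t, z2 t] + wx (ls + z2 t) t *\<^sub>R B)))
      (at t within {0..})"
    by (rule quad_deriv[OF ode[OF t] Ps])
  have i1: "integral {0..ls + z2 t} (\<lambda>y. 2 * (w y t * wt y t)) = 2 * integral {0..ls + z2 t} (\<lambda>y. w y t * wt y t)"
    by simp
  have i2: "integral {0..ls + z2 t} (\<lambda>y. 2 * (wx y t * wxt y t)) = 2 * integral {0..ls + z2 t} (\<lambda>y. wx y t * wxt y t)"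
    by simp
  show ?thesis
    unfolding eqV
    using DERIV_add[OF DERIV_add[OF DERIV_add[OF DERIV_cmult[OF E1, of "d1/2"] DERIV_cmult[OF E2, of "1/2"]]
          DERIV_cmult[OF E3, of "\<gamma>/2"]] DERIV_cmult[OF E4, of d2]]
    unfolding i1 i2 bcL[OF t] by simp
qed

end


lemma final_arith:
  fixes Vd d1 d2 Iwwt Iwxxwt v wxL2 PXGX PXB wxL W0 I0 I1 I2 J Xn \<xi> L lbar D g a \<gamma> \<kappa> \<nu> q \<beta> \<kappa>' :: real
  assumes Vd: "Vd = d1 * Iwwt - v / 2 * wxL2 - Iwxxwt + 2 * d2 * (PXGX + wxL * PXB)"
    and h1: "Iwwt \<le> - D * \<gamma> * W0 + a / 2 * W0 - D * I1 - g * I0 + \<kappa> / 2 * (I0 + L * Xn)"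
    and h2: "- Iwxxwt \<le> - (3 * D / 4) * I2 + a\<^sup>2 / D * I1 - g * \<gamma> * W0 - g * I1 + \<kappa> / 2 * (I2 + L * Xn)"
    and h3: "wxL2 = \<gamma>\<^sup>2 * W0 + 2 * J" and h4: "2 * \<bar>J\<bar> \<le> I1 + I2"
    and hw: "wxL2 = wxL\<^sup>2"
    and h5: "2 * PXGX \<le> - q * Xn" and h6: "\<bar>PXB\<bar> \<le> \<beta> * \<xi>" and hX: "Xn = \<xi>\<^sup>2" and h\<xi>: "0 \<le> \<xi>"
    and \<kappa>': "\<kappa>' = 2 * \<beta>\<^sup>2 / q"
    and nn: "0 \<le> W0" "0 \<le> I0" "0 \<le> I1" "0 \<le> I2" "0 \<le> \<beta>"
    and L: "0 \<le> L" "L \<le> lbar"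
    and D: "D > 0" and g: "g > 0" and \<gamma>: "\<gamma> > 0" and aDg: "a \<le> D * \<gamma>" and q: "q > 0"
    and v: "\<bar>v\<bar> \<le> \<nu>" and \<kappa>: "0 \<le> \<kappa>"
    and d1: "0 \<le> d1" and d1D: "a\<^sup>2 / D \<le> d1 * D" and d2: "0 \<le> d2"
    and c1: "\<nu> * \<gamma> \<le> g / 2" and c2: "\<nu> \<le> g / 2" and c3: "\<nu> \<le> D / 2"
    and c4: "\<kappa> \<le> g" and c5: "\<kappa> \<le> D / 2" and c6: "(d1 + 1) * \<kappa> * lbar \<le> d2 * q / 2"
    and k1: "d2 * \<kappa>' * \<gamma> \<le> g / 4" and k2: "d2 * \<kappa>' \<le> g / 4" and k3: "d2 * \<kappa>' \<le> D / 4"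
  shows "Vd \<le> - (g * \<gamma> / 2) * W0 - (d1 * g / 2) * I0 - (g / 2) * I1 - (d2 * q / 4) * Xn"
proof -
  have Xn0: "0 \<le> Xn" using hX by simp
  have T1: "d1 * Iwwt \<le> d1 * (- D * \<gamma> * W0 + a / 2 * W0 - D * I1 - g * I0 + \<kappa> / 2 * (I0 + L * Xn))"
    by (rule mult_left_mono[OF h1 d1])
  have P1: "d1 * (a / 2 * W0) \<le> d1 * (D * \<gamma> / 2 * W0)"
    using aDg d1 nn by (intro mult_left_mono mult_right_mono) auto
  have P2: "d1 * (\<kappa> / 2 * I0) \<le> d1 * (g / 2 * I0)"
    using c4 d1 nn by (intro mult_left_mono mult_right_mono) auto
  have P3: "(d1 + 1) * (\<kappa> / 2 * (L * Xn)) \<le> d2 * q / 4 * Xn"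
  proof -
    have "(d1 + 1) * (\<kappa> / 2 * (L * Xn)) = ((d1 + 1) * \<kappa> * L) * Xn / 2" by (simp add: algebra_simps)
    also have "\<dots> \<le> ((d1 + 1) * \<kappa> * lbar) * Xn / 2"
      using L d1 \<kappa> Xn0 by (intro divide_right_mono mult_right_mono mult_left_mono) auto
    also have "\<dots> \<le> (d2 * q / 2) * Xn / 2"
      using c6 Xn0 by (intro divide_right_mono mult_right_mono) auto
    finally show ?thesis by simp
  qed
  have T2: "- (v / 2 * wxL2) \<le> \<nu> / 2 * (\<gamma>\<^sup>2 * W0) + (\<nu> / 2 * I1 + \<nu> / 2 * I2)"
  proof -
    have eq: "- (v / 2 * wxL2) = - (v / 2) * (\<gamma>\<^sup>2 * W0) + (- v * J)" unfolding h3 by (simp add: algebra_simps)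
    have a: "- (v / 2) * (\<gamma>\<^sup>2 * W0) \<le> \<nu> / 2 * (\<gamma>\<^sup>2 * W0)"
      using v nn by (intro mult_right_mono) auto
    have b: "- v * J \<le> \<nu> / 2 * I1 + \<nu> / 2 * I2"
    proof -
      have "- v * J \<le> \<bar>v\<bar> * \<bar>J\<bar>" by (simp add: abs_mult[symmetric])
      also have "\<dots> \<le> \<nu> * \<bar>J\<bar>" using v by (intro mult_right_mono) auto
      also have "\<dots> = \<nu> / 2 * (2 * \<bar>J\<bar>)" by simp
      also have "\<dots> \<le> \<nu> / 2 * (I1 + I2)" using h4 v by (intro mult_left_mono) auto
      also have "\<dots> = \<nu> / 2 * I1 + \<nu> / 2 * I2" by (simp add: distrib_left)
      finally show ?thesis .
    qed
    show ?thesis unfolding eq using a b by (rule add_mono)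
  qed
  have T4: "2 * d2 * (PXGX + wxL * PXB) \<le> d2 * (- q / 2 * Xn + \<kappa>' * wxL2)"
  proof -
    have y: "2 * (wxL * PXB) \<le> q / 2 * Xn + \<kappa>' * wxL2"
    proof -
      have "wxL * PXB \<le> \<bar>wxL\<bar> * \<bar>PXB\<bar>" by (simp add: abs_mult[symmetric])
      also have "\<dots> \<le> \<bar>wxL\<bar> * (\<beta> * \<xi>)" using h6 by (intro mult_left_mono) auto
      finally have "2 * (wxL * PXB) \<le> 2 * (\<bar>wxL\<bar> * (\<beta> * \<xi>))" by simp
      also have "\<dots> \<le> q / 2 * Xn + \<kappa>' * wxL2"
      proof -
        have "0 \<le> (q / 2 * \<xi> - \<beta> * \<bar>wxL\<bar>)\<^sup>2" by simp
        then have "q * (\<beta> * \<xi> * \<bar>wxL\<bar>) \<le> (q / 2)\<^sup>2 * \<xi>\<^sup>2 + \<beta>\<^sup>2 * wxL\<^sup>2"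
          by (simp add: power2_eq_square algebra_simps)
        then have "q * (2 * (\<bar>wxL\<bar> * (\<beta> * \<xi>))) \<le> q * (q / 2 * Xn + \<kappa>' * wxL2)"
          using q unfolding hX \<kappa>' hw by (simp add: power2_eq_square algebra_simps)
        then show ?thesis using q by simp
      qed
      finally show ?thesis .
    qed
    have "2 * d2 * (PXGX + wxL * PXB) = d2 * (2 * PXGX) + d2 * (2 * (wxL * PXB))" by (simp add: algebra_simps)
    also have "\<dots> \<le> d2 * (- q * Xn) + d2 * (q / 2 * Xn + \<kappa>' * wxL2)"
      using h5 y d2 by (intro add_mono mult_left_mono) auto
    finally show ?thesis by (simp add: algebra_simps)
  qed
  have P5: "(d2 * \<kappa>') * wxL2 \<le> (g * \<gamma> / 4) * W0 + (g / 4) * I1 + (D / 4) * I2"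
  proof -
    have k0: "0 \<le> d2 * \<kappa>'" using d2 q unfolding \<kappa>' by simp
    have "2 * J \<le> I1 + I2" using h4 by (simp add: abs_le_iff)
    then have "wxL2 \<le> \<gamma>\<^sup>2 * W0 + I1 + I2" using h3 by linarith
    then have "d2 * \<kappa>' * wxL2 \<le> d2 * \<kappa>' * (\<gamma>\<^sup>2 * W0 + I1 + I2)" by (rule mult_left_mono[OF _ k0])
    also have "\<dots> = (d2 * \<kappa>' * \<gamma>) * \<gamma> * W0 + (d2 * \<kappa>') * I1 + (d2 * \<kappa>') * I2"
      by (simp add: power2_eq_square algebra_simps)
    also have "\<dots> \<le> (g / 4) * \<gamma> * W0 + (g / 4) * I1 + (D / 4) * I2"
      using k1 k2 k3 nn \<gamma> by (intro add_mono mult_right_mono) auto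
    finally show ?thesis by simp
  qed
  define cW where "cW = - d1 * D * \<gamma> + d1 * a / 2 + \<nu> / 2 * \<gamma>\<^sup>2 - g * \<gamma>"
  define cI0 where "cI0 = - d1 * g + d1 * \<kappa> / 2"
  define cI1 where "cI1 = - d1 * D + \<nu> / 2 + a\<^sup>2 / D - g"
  define cI2 where "cI2 = \<nu> / 2 - 3 * D / 4 + \<kappa> / 2"
  define cX where "cX = d1 * \<kappa> / 2 * L + \<kappa> / 2 * L - d2 * q / 2"
  have chain: "Vd \<le> d1 * (- D * \<gamma> * W0 + a / 2 * W0 - D * I1 - g * I0 + \<kappa> / 2 * (I0 + L * Xn))
      + (\<nu> / 2 * (\<gamma>\<^sup>2 * W0) + (\<nu> / 2 * I1 + \<nu> / 2 * I2))
      + (- (3 * D / 4) * I2 + a\<^sup>2 / D * I1 - g * \<gamma> * W0 - g * I1 + \<kappa> / 2 * (I2 + L * Xn))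
      + d2 * (- q / 2 * Xn + \<kappa>' * wxL2)"
  proof -
    have "Vd = d1 * Iwwt + (- (v / 2 * wxL2)) + (- Iwxxwt) + 2 * d2 * (PXGX + wxL * PXB)"
      unfolding Vd by simp
    also have "\<dots> \<le> d1 * (- D * \<gamma> * W0 + a / 2 * W0 - D * I1 - g * I0 + \<kappa> / 2 * (I0 + L * Xn))
      + (\<nu> / 2 * (\<gamma>\<^sup>2 * W0) + (\<nu> / 2 * I1 + \<nu> / 2 * I2))
      + (- (3 * D / 4) * I2 + a\<^sup>2 / D * I1 - g * \<gamma> * W0 - g * I1 + \<kappa> / 2 * (I2 + L * Xn))
      + d2 * (- q / 2 * Xn + \<kappa>' * wxL2)" by (intro add_mono T1 T2 h2 T4)
    finally show ?thesis .
  qed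
  have expand: "d1 * (- D * \<gamma> * W0 + a / 2 * W0 - D * I1 - g * I0 + \<kappa> / 2 * (I0 + L * Xn))
      + (\<nu> / 2 * (\<gamma>\<^sup>2 * W0) + (\<nu> / 2 * I1 + \<nu> / 2 * I2))
      + (- (3 * D / 4) * I2 + a\<^sup>2 / D * I1 - g * \<gamma> * W0 - g * I1 + \<kappa> / 2 * (I2 + L * Xn))
      + d2 * (- q / 2 * Xn + \<kappa>' * wxL2)
      = cW * W0 + cI0 * I0 + cI1 * I1 + cI2 * I2 + cX * Xn + (d2 * \<kappa>') * wxL2"
    unfolding cW_def cI0_def cI1_def cI2_def cX_def using D by (simp add: field_simps)
  have QW: "cW * W0 + (g * \<gamma> / 4) * W0 \<le> - (g * \<gamma> / 2) * W0"
  proof -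
    have "d1 * (a / 2) \<le> d1 * (D * \<gamma> / 2)" using aDg d1 by (intro mult_left_mono) auto
    moreover have "\<nu> / 2 * \<gamma>\<^sup>2 \<le> g * \<gamma> / 4"
    proof -
      have "\<nu> / 2 * \<gamma>\<^sup>2 = (\<nu> * \<gamma>) * (\<gamma> / 2)" by (simp add: power2_eq_square)
      also have "\<dots> \<le> (g / 2) * (\<gamma> / 2)" using c1 \<gamma> by (intro mult_right_mono) auto
      finally show ?thesis by simp
    qed
    moreover have "0 \<le> d1 * (D * \<gamma>)" using d1 D \<gamma> by simp
    ultimately have "cW + g * \<gamma> / 4 \<le> - (g * \<gamma> / 2)" unfolding cW_def by (simp add: algebra_simps)
    then have "(cW + g * \<gamma> / 4) * W0 \<le> - (g * \<gamma> / 2) * W0" using nn by (intro mult_right_mono) auto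
    then show ?thesis by (simp add: algebra_simps)
  qed
  have QI0: "cI0 * I0 \<le> - (d1 * g / 2) * I0"
  proof -
    have "d1 * \<kappa> \<le> d1 * g" using c4 d1 by (intro mult_left_mono) auto
    then have "cI0 \<le> - (d1 * g / 2)" unfolding cI0_def by simp
    then show ?thesis using nn by (intro mult_right_mono) auto
  qed
  have QI1: "cI1 * I1 + (g / 4) * I1 \<le> - (g / 2) * I1"
  proof -
    have "cI1 + g / 4 \<le> - (g / 2)" unfolding cI1_def using d1D c2 by simp
    then have "(cI1 + g / 4) * I1 \<le> - (g / 2) * I1" using nn by (intro mult_right_mono) auto
    then show ?thesis by (simp add: algebra_simps)
  qed
  have QI2: "cI2 * I2 + (D / 4) * I2 \<le> 0"
  proof -
    have "cI2 + D / 4 \<le> 0" unfolding cI2_def using c3 c5 by simp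
    then have "(cI2 + D / 4) * I2 \<le> 0 * I2" using nn by (intro mult_right_mono) auto
    then show ?thesis by (simp add: algebra_simps)
  qed
  have QX: "cX * Xn \<le> - (d2 * q / 4) * Xn"
  proof -
    have "(d1 + 1) * \<kappa> * L \<le> (d1 + 1) * \<kappa> * lbar" using L d1 \<kappa> by (intro mult_left_mono) auto
    then have "cX \<le> - (d2 * q / 4)" unfolding cX_def using c6 by (simp add: algebra_simps)
    then show ?thesis using Xn0 by (intro mult_right_mono) auto
  qed
  show ?thesis using chain expand P5 QW QI0 QI1 QI2 QX by linarith
qed


context sol begin

lemma key_bound:
  fixes d1 d2 CF \<nu> q p1 lbar :: real and P Q :: "real^2^2"
  assumes t: "0 \<le> t" and L: "0 < ls + z2 t" and Lle: "ls + z2 t \<le> lbar"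
    and D: "D > 0" and g: "g > 0" and \<gamma>: "\<gamma> > 0" and aDg: "a \<le> D * \<gamma>"
    and Ps: "transpose P = P" and lyap: "transpose (A + outer B K) ** P + P ** (A + outer B K) = - Q"
    and q: "q > 0" and qQ: "\<And>x. q * (norm x)\<^sup>2 \<le> x \<bullet> (Q *v x)"
    and p1: "p1 > 0" "\<And>x. norm (P *v x) \<le> p1 * norm x"
    and CF: "CF \<ge> 0"
    and Fb: "\<And>L x X. 0 \<le> x \<Longrightarrow> x \<le> L \<Longrightarrow> L \<le> lbar \<Longrightarrow> \<bar>Fterm D a g A B C K L x X\<bar> \<le> CF * norm X"
    and v: "\<bar>rg * z1 t\<bar> \<le> \<nu>"
    and d1: "0 \<le> d1" and d1D: "a\<^sup>2 / D \<le> d1 * D" and d2: "0 \<le> d2"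
    and c1: "\<nu> * \<gamma> \<le> g / 2" and c2: "\<nu> \<le> g / 2" and c3: "\<nu> \<le> D / 2"
    and c4: "\<nu> * CF \<le> g" and c5: "\<nu> * CF \<le> D / 2" and c6: "(d1 + 1) * (\<nu> * CF) * lbar \<le> d2 * q / 2"
    and k1: "d2 * (2 * (p1 * norm B)\<^sup>2 / q) * \<gamma> \<le> g / 4"
    and k2: "d2 * (2 * (p1 * norm B)\<^sup>2 / q) \<le> g / 4"
    and k3: "d2 * (2 * (p1 * norm B)\<^sup>2 / q) \<le> D / 4"
  shows "\<exists>Vd. (lyapV ls \<gamma> d1 d2 P w wx z1 z2 has_real_derivative Vd) (at t within {0..}) \<and>
     Vd \<le> - (g * \<gamma> / 2) * (w 0 t)\<^sup>2 - (d1 * g / 2) * integral {0..ls + z2 t} (\<lambda>x. (w x t)\<^sup>2)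
          - (g / 2) * integral {0..ls + z2 t} (\<lambda>x. (wx x t)\<^sup>2)
          - (d2 * q / 4) * (norm (vector [z1 t, z2 t] :: real^2))\<^sup>2"
proof -
  define Lt where "Lt = ls + z2 t"
  define Xt where "Xt = (vector [z1 t, z2 t] :: real^2)"
  define G where "G = A + outer B K"
  define \<xi> where "\<xi> = norm Xt"
  define \<kappa> where "\<kappa> = \<nu> * CF"
  have \<nu>0: "0 \<le> \<nu>" using v by linarith
  have \<kappa>0: "0 \<le> \<kappa>" unfolding \<kappa>_def using \<nu>0 CF by simp
  have cs: "continuous_on {0..Lt} (\<lambda>y. f y t)"
    if "continuous_on {(x, s). 0 \<le> s \<and> 0 \<le> x \<and> x \<le> ls + z2 s} (\<lambda>(x, s). f x s)"
    for f :: "real \<Rightarrow> real \<Rightarrow> real"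
    using slice_cont[where l="\<lambda>s. ls + z2 s" and f=f and s=t and a=0 and b=Lt] that t Lt_def by simp
  have pdeb: "\<And>y. 0 < y \<Longrightarrow> y < Lt \<Longrightarrow> \<bar>wt y t - (D * wxx y t - a * wx y t - g * w y t)\<bar> \<le> \<kappa> * \<xi>"
  proof -
    fix y assume y: "0 < y" "y < Lt"
    have "wt y t - (D * wxx y t - a * wx y t - g * w y t) = - (rg * z1 t * Fterm D a g A B C K Lt y Xt)"
      using pde[OF t y(1)] y(2) unfolding Lt_def Xt_def by simp
    then have "\<bar>wt y t - (D * wxx y t - a * wx y t - g * w y t)\<bar> = \<bar>rg * z1 t\<bar> * \<bar>Fterm D a g A B C K Lt y Xt\<bar>"
      by (simp add: abs_mult)
    also have "\<dots> \<le> \<nu> * (CF * \<xi>)"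
      using v Fb[of y Lt Xt] y Lle \<nu>0 unfolding \<xi>_def Lt_def by (intro mult_mono) auto
    finally show "\<bar>wt y t - (D * wxx y t - a * wx y t - g * w y t)\<bar> \<le> \<kappa> * \<xi>"
      unfolding \<kappa>_def by (simp add: mult_ac)
  qed
  have ftb_prems: "0 < Lt" "0 < D" "continuous_on {0..Lt} (\<lambda>y. w y t)" "continuous_on {0..Lt} (\<lambda>y. wx y t)"
    "continuous_on {0..Lt} (\<lambda>y. wxx y t)" "continuous_on {0..Lt} (\<lambda>y. wt y t)"
    using L D cs[OF cw] cs[OF cwx] cs[OF cwxx] cs[OF cwt] unfolding Lt_def by auto
  have du: "\<And>y. y \<in> {0..Lt} \<Longrightarrow> ((\<lambda>y. w y t) has_real_derivative wx y t) (at y within {0..Lt})"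
    using dw[OF t] unfolding Lt_def by auto
  have dux: "\<And>y. y \<in> {0..Lt} \<Longrightarrow> ((\<lambda>y. wx y t) has_real_derivative wxx y t) (at y within {0..Lt})"
    using dwx[OF t] unfolding Lt_def by auto
  have \<xi>0: "0 \<le> \<xi>" unfolding \<xi>_def by simp
  have bcs: "wx 0 t = \<gamma> * w 0 t" "w Lt t = 0" using bc0[OF t] bcL[OF t] unfolding Lt_def by auto
  note F = fixed_time_bounds[where u="\<lambda>y. w y t" and ux="\<lambda>y. wx y t" and uxx="\<lambda>y. wxx y t"
      and ut="\<lambda>y. wt y t" and L=Lt and D=D and \<gamma>=\<gamma> and a=a and g=g and \<kappa>=\<kappa> and \<xi>=\<xi>,
      OF ftb_prems du dux bcs pdeb \<kappa>0 \<xi>0]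
  define I0 where "I0 = integral {0..Lt} (\<lambda>y. (w y t)\<^sup>2)"
  define I1 where "I1 = integral {0..Lt} (\<lambda>y. (wx y t)\<^sup>2)"
  define I2 where "I2 = integral {0..Lt} (\<lambda>y. (wxx y t)\<^sup>2)"
  define J where "J = integral {0..Lt} (\<lambda>y. wx y t * wxx y t)"
  have F1: "integral {0..Lt} (\<lambda>y. w y t * wt y t)
      \<le> - D * \<gamma> * (w 0 t)\<^sup>2 + a / 2 * (w 0 t)\<^sup>2 - D * I1 - g * I0 + \<kappa> / 2 * (I0 + Lt * (\<xi>\<^sup>2))"
    unfolding I0_def I1_def by (rule F(1))
  have F2: "- integral {0..Lt} (\<lambda>y. wxx y t * wt y t)
      \<le> - (3 * D / 4) * I2 + a\<^sup>2 / D * I1 - g * \<gamma> * (w 0 t)\<^sup>2 - g * I1 + \<kappa> / 2 * (I2 + Lt * (\<xi>\<^sup>2))"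
    unfolding I1_def I2_def by (rule F(2))
  have F3: "(wx Lt t)\<^sup>2 = \<gamma>\<^sup>2 * (w 0 t)\<^sup>2 + 2 * J" unfolding J_def by (rule F(3))
  have F4: "2 * \<bar>J\<bar> \<le> I1 + I2" using F(4) unfolding J_def I1_def I2_def by simp
  have F5: "0 \<le> I0" "0 \<le> I1" "0 \<le> I2" using F(5-7) unfolding I0_def I1_def I2_def by auto
  define Vd where "Vd = d1 / 2 * (2 * integral {0..ls + z2 t} (\<lambda>y. w y t * wt y t))
     + 1 / 2 * (rg * z1 t * (wx (ls + z2 t) t)\<^sup>2 + 2 * integral {0..ls + z2 t} (\<lambda>y. wx y t * wxt y t))
     + \<gamma> / 2 * (2 * (w 0 t * wt 0 t))
     + d2 * (2 * ((P *v vector [z1 t, z2 t]) \<bullet> ((A + outer B K) *v vector [z1 t, z2 t] + wx (ls + z2 t) t *\<^sub>R B)))"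
  have dV: "(lyapV ls \<gamma> d1 d2 P w wx z1 z2 has_real_derivative Vd) (at t within {0..})"
    unfolding Vd_def by (rule V_deriv[OF t L Ps])
  have ib: "integral {0..Lt} (\<lambda>y. wx y t * wxt y t)
       = - (rg * z1 t) * (wx Lt t)\<^sup>2 - \<gamma> * w 0 t * wt 0 t - integral {0..Lt} (\<lambda>y. wxx y t * wt y t)"
    using ibp[OF t L] unfolding Lt_def .
  have Vd_eq: "Vd = d1 * integral {0..Lt} (\<lambda>y. w y t * wt y t) - (rg * z1 t) / 2 * (wx Lt t)\<^sup>2
      - integral {0..Lt} (\<lambda>y. wxx y t * wt y t)
      + 2 * d2 * ((P *v Xt) \<bullet> (G *v Xt) + wx Lt t * ((P *v Xt) \<bullet> B))"
    unfolding Vd_def Lt_def[symmetric] Xt_def[symmetric] G_def[symmetric] ib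
    by (simp add: inner_add_right algebra_simps)
  have h5: "2 * ((P *v Xt) \<bullet> (G *v Xt)) \<le> - q * \<xi>\<^sup>2"
    using lyap_identity[OF lyap[folded G_def] Ps, of Xt] qQ[of Xt] unfolding \<xi>_def by simp
  have h6: "\<bar>(P *v Xt) \<bullet> B\<bar> \<le> (p1 * norm B) * \<xi>"
  proof -
    have "\<bar>(P *v Xt) \<bullet> B\<bar> \<le> norm (P *v Xt) * norm B" by (rule Cauchy_Schwarz_ineq2)
    also have "\<dots> \<le> (p1 * norm Xt) * norm B" by (rule mult_right_mono[OF p1(2)]) simp
    finally show ?thesis unfolding \<xi>_def by (simp add: mult_ac)
  qed
  have fin: "Vd \<le> - (g * \<gamma> / 2) * (w 0 t)\<^sup>2 - (d1 * g / 2) * I0 - (g / 2) * I1 - (d2 * q / 4) * \<xi>\<^sup>2"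
  proof (rule final_arith[OF Vd_eq F1 F2 F3 F4 refl h5 h6 refl \<xi>0 refl _ F5(1-3) _ _ Lle[folded Lt_def]
        D g \<gamma> aDg q v \<kappa>0 d1 d1D d2 c1 c2 c3 _ _ _ k1 k2 k3])
    show "0 \<le> (w 0 t)\<^sup>2" by simp
    show "0 \<le> p1 * norm B" using p1 by simp
    show "0 \<le> Lt" using L unfolding Lt_def by simp
    show "\<kappa> \<le> g" "\<kappa> \<le> D / 2" "(d1 + 1) * \<kappa> * lbar \<le> d2 * q / 2" unfolding \<kappa>_def using c4 c5 c6 by auto
  qed
  show ?thesis
    using dV fin unfolding I0_def I1_def \<xi>_def Xt_def Lt_def by blast
qed

end


lemma decay_lemma:
  fixes V :: "real \<Rightarrow> real"
  assumes T: "0 \<le> T"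
    and dV: "\<And>t. t \<in> {0..T} \<Longrightarrow> \<exists>Vd. (V has_real_derivative Vd) (at t within {0..}) \<and> Vd \<le> - c * V t"
    and t: "t \<in> {0..T}"
  shows "V t \<le> V 0 * exp (- c * t)"
proof -
  define h where "h s = V s * exp (c * s)" for s
  have dh: "\<exists>Hd. (h has_real_derivative Hd) (at s within {0..}) \<and> Hd \<le> 0" if s: "s \<in> {0..T}" for s
  proof -
    obtain Vd where Vd: "(V has_real_derivative Vd) (at s within {0..})" "Vd \<le> - c * V s"
      using dV[OF s] by blast
    have "(h has_real_derivative Vd * exp (c * s) + V s * (exp (c * s) * c)) (at s within {0..})"
      unfolding h_def
      by (rule DERIV_cong[OF DERIV_mult[OF Vd(1) DERIV_chain2[OF DERIV_exp DERIV_cmult_Id]]]) (simp add: algebra_simps)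
    moreover have "Vd * exp (c * s) + V s * (exp (c * s) * c) \<le> 0"
    proof -
      have "Vd * exp (c * s) \<le> (- c * V s) * exp (c * s)" using Vd(2) by (intro mult_right_mono) auto
      then show ?thesis by (simp add: algebra_simps)
    qed
    ultimately show ?thesis by blast
  qed
  have "h t \<le> h 0"
  proof (cases "t = 0")
    case True then show ?thesis by simp
  next
    case False
    then have t0: "0 < t" using t by simp
    have ch: "continuous_on {0..t} h"
    proof (rule continuous_on_subset[where s="{0..T}"])
      show "continuous_on {0..T} h"
        unfolding continuous_on_eq_continuous_within
      proof
        fix s assume s: "s \<in> {0..T}"
        then obtain Hd where "(h has_real_derivative Hd) (at s within {0..})" using dh by blast
        then have "continuous (at s within {0..}) h" by (rule DERIV_continuous)
        then show "continuous (at s within {0..T}) h"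
          by (rule continuous_within_subset) auto
      qed
    qed (use t in auto)
    have dif: "h differentiable (at x)" if "0 < x" "x < t" for x
    proof -
      have x: "x \<in> {0..T}" using that t by auto
      obtain Hd where "(h has_real_derivative Hd) (at x within {0..})" using dh[OF x] by blast
      moreover have "at x within {0..} = at x"
        by (rule at_within_interior) (use that in simp)
      ultimately show ?thesis using real_differentiable_def by auto
    qed
    obtain l z where lz: "0 < z" "z < t" "DERIV h z :> l" "h t - h 0 = (t - 0) * l"
      using MVT[OF t0 ch dif] by blast
    have z: "z \<in> {0..T}" using lz t by auto
    obtain Hd where Hd: "(h has_real_derivative Hd) (at z within {0..})" "Hd \<le> 0" using dh[OF z] by blast
    have "at z within {0..} = at z" by (rule at_within_interior) (use lz in simp)
    then have "l = Hd" using Hd(1) lz(3) DERIV_unique by metis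
    then have "h t - h 0 \<le> 0" using lz(4) Hd(2) t0 by (simp add: mult_nonneg_nonpos)
    then show ?thesis by simp
  qed
  then have "V t * exp (c * t) \<le> V 0" unfolding h_def by simp
  then have "V t * exp (c * t) * exp (- c * t) \<le> V 0 * exp (- c * t)"
    by (intro mult_right_mono) auto
  then show ?thesis by (simp add: exp_minus_inverse mult.assoc flip: exp_add)
qed

lemma bootstrap:
  fixes f :: "real \<Rightarrow> real"
  assumes cf: "continuous_on {0..} f" and R: "R > 0" and f0: "f 0 < R"
    and H: "\<And>T. 0 \<le> T \<Longrightarrow> (\<forall>t\<in>{0..T}. f t \<le> R) \<Longrightarrow> f T < R"
  shows "\<forall>t\<ge>0. f t \<le> R"
proof (rule ccontr)
  assume "\<not> (\<forall>t\<ge>0. f t \<le> R)"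
  then obtain s0 where s0: "0 \<le> s0" "R < f s0" by (auto simp: not_le)
  define S where "S = {t. 0 \<le> t \<and> R < f t}"
  define T where "T = Inf S"
  have Sne: "S \<noteq> {}" using s0 unfolding S_def by auto
  have bdd: "bdd_below S" unfolding S_def by (rule bdd_belowI[of _ 0]) auto
  have T0: "0 \<le> T" unfolding T_def using Sne by (intro cInf_greatest) (auto simp: S_def)
  have below: "f t \<le> R" if "0 \<le> t" "t < T" for t
  proof (rule ccontr)
    assume "\<not> f t \<le> R"
    then have "t \<in> S" unfolding S_def using that by auto
    then have "T \<le> t" unfolding T_def by (rule cInf_lower[OF _ bdd])
    then show False using that by simp
  qed
  have cT: "continuous (at T within {0..}) f" using cf T0 continuous_on_eq_continuous_within by auto
  have fT: "f T \<le> R"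
  proof (rule ccontr)
    assume "\<not> f T \<le> R"
    then have gt: "R < f T" by simp
    then obtain d where d: "d > 0" "\<forall>x\<in>{0..}. dist x T < d \<longrightarrow> dist (f x) (f T) < f T - R"
      using cT unfolding continuous_within_eps_delta by (metis diff_gt_0_iff_gt)
    show False
    proof (cases "T = 0")
      case True then show False using gt f0 by simp
    next
      case False
      define t where "t = T - min d T / 2"
      have t: "0 \<le> t" "t < T" "dist t T < d" using False T0 d unfolding t_def dist_real_def by auto
      have "dist (f t) (f T) < f T - R" using d(2) t by auto
      then have "R < f t" by (simp add: dist_real_def abs_less_iff)
      then show False using below[OF t(1,2)] by simp
    qed
  qed
  have fTR: "f T < R" using H[OF T0] below fT by (metis atLeastAtMost_iff order_le_less)
  obtain d where d: "d > 0" "\<forall>x\<in>{0..}. dist x T < d \<longrightarrow> dist (f x) (f T) < R - f T"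
    using cT fTR unfolding continuous_within_eps_delta by (metis diff_gt_0_iff_gt)
  have "T + d \<le> T" unfolding T_def
  proof (rule cInf_greatest[OF Sne])
    fix s assume s: "s \<in> S"
    then have s0: "0 \<le> s" "R < f s" unfolding S_def by auto
    have Ts: "T \<le> s" unfolding T_def by (rule cInf_lower[OF s bdd])
    show "Inf S + d \<le> s"
    proof (rule ccontr)
      assume "\<not> Inf S + d \<le> s"
      then have "dist s T < d" using Ts unfolding T_def dist_real_def by auto
      then have "dist (f s) (f T) < R - f T" using d(2) s0 by auto
      then have "f s < R" by (simp add: dist_real_def abs_less_iff)
      then show False using s0 by simp
    qed
  qed
  then show False using d by simp
qed


theorem lemma3:
  fixes D a g rg lc cinf atl \<beta> ls \<gamma> lbar :: real
    and K :: "real^2" and P Q :: "real^2^2"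
  defines "A \<equiv> matA atl rg" and "B \<equiv> vecB \<beta>" and "C \<equiv> vecC a g lc cinf D"
      and "vbar \<equiv> min (g / (4 * \<gamma>)) (D / (8 * lbar))"
  assumes "D > 0" "g > 0" "rg > 0" "lc > 0" "cinf > 0" "ls > 0" "\<gamma> > 0"
      and "\<gamma> \<ge> a / D" and "lbar > ls"
      and "hurwitz (A + outer B K)"
      and "pos_def P" and "pos_def Q"
      and "transpose (A + outer B K) ** P + P ** (A + outer B K) = - Q"
  shows "\<exists>d1min. \<forall>d1 > d1min. \<exists>d2max > 0. \<forall>d2. 0 < d2 \<and> d2 < d2max \<longrightarrow>
     (let \<alpha> = Min {2 * g + D / (4 * lbar), (4 * g + d1 * D) / 2,
                    lambda_min Q / (2 * lambda_max P), d2 * (2 * d1 * D + g) / 4} in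
      \<exists>M > 0. \<forall>w wx wxx wt wxt z1 z2.
        target_solution D a g rg ls \<gamma> A B C K w wx wxx wt wxt z1 z2 \<and>
        lyapV ls \<gamma> d1 d2 P w wx z1 z2 0 < M \<longrightarrow>
        (\<forall>t \<ge> 0. 0 < ls + z2 t \<and> ls + z2 t \<le> lbar \<and> \<bar>rg * z1 t\<bar> \<le> vbar \<and>
                 lyapV ls \<gamma> d1 d2 P w wx z1 z2 t
                   \<le> lyapV ls \<gamma> d1 d2 P w wx z1 z2 0 * exp (- (\<alpha> / 2) * t)))"
proof -
  have D: "D > 0" and g: "g > 0" and rg: "rg > 0" and ls: "ls > 0" and \<gamma>: "\<gamma> > 0"
    and \<gamma>a: "\<gamma> \<ge> a / D" and lb: "lbar > ls" and pP: "pos_def P" and pQ: "pos_def Q"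
    and ly: "transpose (A + outer B K) ** P + P ** (A + outer B K) = - Q"
    using assms by auto
  have aDg: "a \<le> D * \<gamma>" using \<gamma>a D by (simp add: pos_divide_le_eq mult.commute)
  have hA2: "\<And>x. ((A + outer B K) *v x) $ 2 = rg * x $ 1"
    unfolding A_def B_def matA_def vecB_def outer_def by (simp add: matrix_vector_mult_def sum_2)
  have hB2: "B $ 2 = 0" unfolding B_def vecB_def by simp
  obtain CF where CF: "CF \<ge> 0"
    "\<And>L x X. 0 \<le> x \<Longrightarrow> x \<le> L \<Longrightarrow> L \<le> lbar \<Longrightarrow> \<bar>Fterm D a g A B C K L x X\<bar> \<le> CF * norm X"
    using Fterm_bound[where lbar=lbar and D=D and a=a and g=g and A=A and B=B and C=C and K=K] by blast
  obtain q where q: "q > 0" "\<And>x. q * (norm x)\<^sup>2 \<le> x \<bullet> (Q *v x)" using quad_lower[OF pQ] by blast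
  obtain p0 where p0: "p0 > 0" "\<And>x. p0 * (norm x)\<^sup>2 \<le> x \<bullet> (P *v x)" using quad_lower[OF pP] by blast
  obtain p1 where p1: "p1 > 0" "\<And>x. x \<bullet> (P *v x) \<le> p1 * (norm x)\<^sup>2" "\<And>x. norm (P *v x) \<le> p1 * norm x"
    using quad_upper by blast
  have Ps: "transpose P = P" using pP unfolding pos_def_def by simp
  define \<kappa>' where "\<kappa>' = 2 * (p1 * norm B)\<^sup>2 / q"
  have \<kappa>'0: "0 \<le> \<kappa>'" unfolding \<kappa>'_def using q by simp
  define c where "c = min g (q / (4 * p1))"
  have c0: "c > 0" using g q p1 unfolding c_def by simp
  have cg: "c \<le> g" unfolding c_def by simp
  have cp: "c * p1 \<le> q / 4"
  proof -
    have "c \<le> q / (4 * p1)" unfolding c_def by simp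
    then show ?thesis using p1 by (simp add: pos_le_divide_eq)
  qed
  have vb: "vbar > 0" unfolding vbar_def using g \<gamma> D lb ls by simp
  have int_nn: "0 \<le> integral S (\<lambda>x. (h x)\<^sup>2)" for S :: "real set" and h :: "real \<Rightarrow> real"
  proof (cases "(\<lambda>x. (h x)\<^sup>2) integrable_on S")
    case True then show ?thesis by (rule integral_nonneg) simp
  next
    case False then show ?thesis by (simp add: not_integrable_integral)
  qed
  show ?thesis
  proof (rule exI[of _ "a\<^sup>2 / D\<^sup>2"], intro allI impI)
    fix d1 :: real assume d1g: "d1 > a\<^sup>2 / D\<^sup>2"
    have "0 \<le> a\<^sup>2 / D\<^sup>2" by simp
    then have d10: "0 \<le> d1" using d1g by linarith
    have d1D: "a\<^sup>2 / D \<le> d1 * D"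
    proof -
      have "a\<^sup>2 / D = (a\<^sup>2 / D\<^sup>2) * D" using D by (simp add: power2_eq_square)
      also have "\<dots> \<le> d1 * D" using d1g D by (intro mult_right_mono) auto
      finally show ?thesis .
    qed
    have den: "2 * d1 * D + g > 0" using d10 D g by (simp add: add_nonneg_pos)
    define d2max where "d2max = min (g / (4 * \<gamma> * (\<kappa>' + 1))) (min (g / (4 * (\<kappa>' + 1)))
                          (min (D / (4 * (\<kappa>' + 1))) (8 * c / (2 * d1 * D + g))))"
    have d2max0: "d2max > 0" unfolding d2max_def using g \<gamma> D \<kappa>'0 c0 den by simp
    show "\<exists>d2max>0. \<forall>d2. 0 < d2 \<and> d2 < d2max \<longrightarrow>
     (let \<alpha> = Min {2 * g + D / (4 * lbar), (4 * g + d1 * D) / 2,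
                    lambda_min Q / (2 * lambda_max P), d2 * (2 * d1 * D + g) / 4} in
      \<exists>M > 0. \<forall>w wx wxx wt wxt z1 z2.
        target_solution D a g rg ls \<gamma> A B C K w wx wxx wt wxt z1 z2 \<and>
        lyapV ls \<gamma> d1 d2 P w wx z1 z2 0 < M \<longrightarrow>
        (\<forall>t \<ge> 0. 0 < ls + z2 t \<and> ls + z2 t \<le> lbar \<and> \<bar>rg * z1 t\<bar> \<le> vbar \<and>
                 lyapV ls \<gamma> d1 d2 P w wx z1 z2 t
                   \<le> lyapV ls \<gamma> d1 d2 P w wx z1 z2 0 * exp (- (\<alpha> / 2) * t)))"
    proof (rule exI[of _ d2max], intro conjI allI impI)
      show "d2max > 0" by (rule d2max0)
      fix d2 :: real assume d2: "0 < d2 \<and> d2 < d2max"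
      have d20: "0 < d2" using d2 by simp
      have kk: "d2 * (\<kappa>' + 1) * \<gamma> \<le> g / 4" "d2 * (\<kappa>' + 1) \<le> g / 4" "d2 * (\<kappa>' + 1) \<le> D / 4"
        and d2c: "d2 * (2 * d1 * D + g) \<le> 8 * c"
      proof -
        have "d2 \<le> g / (4 * \<gamma> * (\<kappa>' + 1))" using d2 unfolding d2max_def by simp
        then show "d2 * (\<kappa>' + 1) * \<gamma> \<le> g / 4" using \<gamma> \<kappa>'0 by (simp add: pos_le_divide_eq mult_ac)
        have "d2 \<le> g / (4 * (\<kappa>' + 1))" using d2 unfolding d2max_def by simp
        then show "d2 * (\<kappa>' + 1) \<le> g / 4" using \<kappa>'0 by (simp add: pos_le_divide_eq mult_ac)
        have "d2 \<le> D / (4 * (\<kappa>' + 1))" using d2 unfolding d2max_def by simp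
        then show "d2 * (\<kappa>' + 1) \<le> D / 4" using \<kappa>'0 by (simp add: pos_le_divide_eq mult_ac)
        have "d2 \<le> 8 * c / (2 * d1 * D + g)" using d2 unfolding d2max_def by simp
        then show "d2 * (2 * d1 * D + g) \<le> 8 * c" using den by (simp add: pos_le_divide_eq)
      qed
      have k1: "d2 * \<kappa>' * \<gamma> \<le> g / 4"
      proof -
        have "d2 * \<kappa>' * \<gamma> \<le> d2 * (\<kappa>' + 1) * \<gamma>" using d20 \<gamma> by (intro mult_right_mono mult_left_mono) auto
        then show ?thesis using kk(1) by linarith
      qed
      have k2: "d2 * \<kappa>' \<le> g / 4" using kk(2) d20 by (simp add: distrib_left)
      have k3: "d2 * \<kappa>' \<le> D / 4" using kk(3) d20 by (simp add: distrib_left)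
      define \<alpha> where "\<alpha> = Min {2 * g + D / (4 * lbar), (4 * g + d1 * D) / 2,
                    lambda_min Q / (2 * lambda_max P), d2 * (2 * d1 * D + g) / 4}"
      have \<alpha>c: "\<alpha> / 2 \<le> c"
      proof -
        have "\<alpha> \<le> d2 * (2 * d1 * D + g) / 4" unfolding \<alpha>_def by (rule Min_le) auto
        then show ?thesis using d2c by simp
      qed
      define \<nu>0 where "\<nu>0 = min (min (g / (2 * \<gamma>)) (g / 2)) (min (D / 2) (min (g / (CF + 1))
               (min (D / (2 * (CF + 1))) (d2 * q / (2 * (d1 + 1) * lbar * (CF + 1))))))"
      have lbar0: "lbar > 0" using lb ls by simp
      have \<nu>00: "\<nu>0 > 0" unfolding \<nu>0_def using g \<gamma> D CF(1) d20 q d10 lbar0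
        by (simp add: add_nonneg_pos)
      define \<nu>1 where "\<nu>1 = min \<nu>0 vbar"
      have \<nu>10: "\<nu>1 > 0" unfolding \<nu>1_def using \<nu>00 vb by simp
      define \<rho> where "\<rho> = min (\<nu>1 / rg) (min (ls / 2) (lbar - ls))"
      have \<rho>0: "\<rho> > 0" unfolding \<rho>_def using \<nu>10 rg ls lb by simp
      define M where "M = d2 * p0 * \<rho>\<^sup>2 / 2"
      have M0: "M > 0" unfolding M_def using d20 p0 \<rho>0 by simp
      define \<nu> where "\<nu> = rg * \<rho>"
      have \<nu>\<nu>1: "\<nu> \<le> \<nu>1"
      proof -
        have "\<rho> \<le> \<nu>1 / rg" unfolding \<rho>_def by simp
        then show ?thesis unfolding \<nu>_def using rg by (simp add: pos_le_divide_eq mult.commute)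
      qed
      have \<nu>0': "0 \<le> \<nu>" unfolding \<nu>_def using rg \<rho>0 by simp
      have \<nu>le: "\<nu> \<le> \<nu>0" "\<nu> \<le> vbar" using \<nu>\<nu>1 unfolding \<nu>1_def by auto
      have c1: "\<nu> * \<gamma> \<le> g / 2"
      proof -
        have "\<nu> \<le> g / (2 * \<gamma>)" using \<nu>le unfolding \<nu>0_def by simp
        then have "\<nu> * (2 * \<gamma>) \<le> g" using \<gamma> by (simp add: pos_le_divide_eq)
        moreover have "\<nu> * (2 * \<gamma>) = 2 * (\<nu> * \<gamma>)" by simp
        ultimately show ?thesis by linarith
      qed
      have c2: "\<nu> \<le> g / 2" and c3: "\<nu> \<le> D / 2" using \<nu>le unfolding \<nu>0_def by auto
      have c4: "\<nu> * CF \<le> g"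
      proof -
        have "\<nu> \<le> g / (CF + 1)" using \<nu>le unfolding \<nu>0_def by simp
        then have "\<nu> * (CF + 1) \<le> g" using CF(1) by (simp add: pos_le_divide_eq)
        then show ?thesis using \<nu>0' by (simp add: distrib_left)
      qed
      have c5: "\<nu> * CF \<le> D / 2"
      proof -
        have "\<nu> \<le> D / (2 * (CF + 1))" using \<nu>le unfolding \<nu>0_def by simp
        then have "\<nu> * (2 * (CF + 1)) \<le> D" using CF(1) by (simp add: pos_le_divide_eq)
        then show ?thesis using \<nu>0' by (simp add: distrib_left)
      qed
      have c6: "(d1 + 1) * (\<nu> * CF) * lbar \<le> d2 * q / 2"
      proof -
        have "\<nu> \<le> d2 * q / (2 * (d1 + 1) * lbar * (CF + 1))" using \<nu>le unfolding \<nu>0_def by simp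
        then have h: "\<nu> * (2 * (d1 + 1) * lbar * (CF + 1)) \<le> d2 * q"
          using CF(1) d10 lbar0 by (simp add: pos_le_divide_eq)
        have "(d1 + 1) * (\<nu> * CF) * lbar \<le> (d1 + 1) * (\<nu> * (CF + 1)) * lbar"
          using d10 lbar0 \<nu>0' by (intro mult_right_mono mult_left_mono) auto
        also have "\<dots> = \<nu> * (2 * (d1 + 1) * lbar * (CF + 1)) / 2" by (simp add: algebra_simps)
        also have "\<dots> \<le> d2 * q / 2" using h by simp
        finally show ?thesis .
      qed
      show "let \<alpha> = Min {2 * g + D / (4 * lbar), (4 * g + d1 * D) / 2,
                    lambda_min Q / (2 * lambda_max P), d2 * (2 * d1 * D + g) / 4} in
      \<exists>M > 0. \<forall>w wx wxx wt wxt z1 z2.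
        target_solution D a g rg ls \<gamma> A B C K w wx wxx wt wxt z1 z2 \<and>
        lyapV ls \<gamma> d1 d2 P w wx z1 z2 0 < M \<longrightarrow>
        (\<forall>t \<ge> 0. 0 < ls + z2 t \<and> ls + z2 t \<le> lbar \<and> \<bar>rg * z1 t\<bar> \<le> vbar \<and>
                 lyapV ls \<gamma> d1 d2 P w wx z1 z2 t
                   \<le> lyapV ls \<gamma> d1 d2 P w wx z1 z2 0 * exp (- (\<alpha> / 2) * t))"
        unfolding Let_def \<alpha>_def[symmetric]
      proof (rule exI[of _ M], rule conjI[OF M0], intro allI impI)
        fix w wx wxx wt wxt :: "real \<Rightarrow> real \<Rightarrow> real" and z1 z2 :: "real \<Rightarrow> real"
        assume H: "target_solution D a g rg ls \<gamma> A B C K w wx wxx wt wxt z1 z2 \<and>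
          lyapV ls \<gamma> d1 d2 P w wx z1 z2 0 < M"
        interpret S: sol D a g rg ls \<gamma> A B C K w wx wxx wt wxt z1 z2
          using H hA2 hB2 by unfold_locales auto
        define V where "V = lyapV ls \<gamma> d1 d2 P w wx z1 z2"
        define f where "f t = (norm (vector [z1 t, z2 t] :: real^2))\<^sup>2" for t
        have V0M: "V 0 < M" using H unfolding V_def by simp
        have Vlow: "d2 * p0 * f t \<le> V t" for t
        proof -
          have "V t = d1 / 2 * integral {0..ls + z2 t} (\<lambda>x. (w x t)\<^sup>2)
              + 1 / 2 * integral {0..ls + z2 t} (\<lambda>x. (wx x t)\<^sup>2) + \<gamma> / 2 * (w 0 t)\<^sup>2
              + d2 * (vector [z1 t, z2 t] \<bullet> (P *v vector [z1 t, z2 t]))"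
            unfolding V_def lyapV_def Let_def by simp
          moreover have "0 \<le> d1 / 2 * integral {0..ls + z2 t} (\<lambda>x. (w x t)\<^sup>2)" using d10 int_nn by simp
          moreover have "0 \<le> 1 / 2 * integral {0..ls + z2 t} (\<lambda>x. (wx x t)\<^sup>2)" using int_nn by simp
          moreover have "0 \<le> \<gamma> / 2 * (w 0 t)\<^sup>2" using \<gamma> by simp
          moreover have "d2 * (p0 * f t) \<le> d2 * (vector [z1 t, z2 t] \<bullet> (P *v vector [z1 t, z2 t]))"
            unfolding f_def using p0(2) d20 by (intro mult_left_mono) auto
          ultimately show ?thesis by (simp add: mult.assoc)
        qed
        have f0le: "f t \<le> V t / (d2 * p0)" for t
          using Vlow[of t] d20 p0 by (simp add: pos_le_divide_eq mult.commute)
        have zb: "\<bar>z1 t\<bar> \<le> \<rho> \<and> \<bar>z2 t\<bar> \<le> \<rho>" if ft: "f t \<le> \<rho>\<^sup>2" for t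
        proof -
          have n: "norm (vector [z1 t, z2 t] :: real^2) \<le> \<rho>"
            by (rule power2_le_imp_le) (use ft \<rho>0 in \<open>auto simp: f_def\<close>)
          have "\<bar>(vector [z1 t, z2 t] :: real^2) $ 1\<bar> \<le> norm (vector [z1 t, z2 t] :: real^2)"
            "\<bar>(vector [z1 t, z2 t] :: real^2) $ 2\<bar> \<le> norm (vector [z1 t, z2 t] :: real^2)"
            by (rule component_le_norm_cart)+
          then show ?thesis using n by simp
        qed
        have region: "0 < ls + z2 t \<and> ls + z2 t \<le> lbar \<and> \<bar>rg * z1 t\<bar> \<le> \<nu>" if ft: "f t \<le> \<rho>\<^sup>2" for t
        proof -
          have z: "\<bar>z1 t\<bar> \<le> \<rho>" "\<bar>z2 t\<bar> \<le> \<rho>" using zb[OF ft] by auto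
          have "\<rho> \<le> ls / 2" "\<rho> \<le> lbar - ls"
            using min.cobounded2[of "\<nu>1 / rg" "min (ls / 2) (lbar - ls)"] min.cobounded1[of "ls / 2" "lbar - ls"]
              min.cobounded2[of "ls / 2" "lbar - ls"] unfolding \<rho>_def by linarith+
          moreover have "\<bar>rg * z1 t\<bar> \<le> rg * \<rho>" using z rg by (simp add: abs_mult)
          moreover have "- \<rho> \<le> z2 t" "z2 t \<le> \<rho>" using z(2) by (simp_all add: abs_le_iff)
          ultimately show ?thesis using ls unfolding \<nu>_def by linarith
        qed
        have dgood: "\<exists>Vd. (V has_real_derivative Vd) (at t within {0..}) \<and> Vd \<le> - c * V t"
          if t: "0 \<le> t" and ft: "f t \<le> \<rho>\<^sup>2" for t
        proof -
          have r: "0 < ls + z2 t" "ls + z2 t \<le> lbar" "\<bar>rg * z1 t\<bar> \<le> \<nu>" using region[OF ft] by auto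
          obtain Vd where Vd: "(V has_real_derivative Vd) (at t within {0..})"
            "Vd \<le> - (g * \<gamma> / 2) * (w 0 t)\<^sup>2 - (d1 * g / 2) * integral {0..ls + z2 t} (\<lambda>x. (w x t)\<^sup>2)
                 - (g / 2) * integral {0..ls + z2 t} (\<lambda>x. (wx x t)\<^sup>2)
                 - (d2 * q / 4) * (norm (vector [z1 t, z2 t] :: real^2))\<^sup>2"
            using S.key_bound[OF t r(1) r(2) D g \<gamma> aDg Ps ly q p1(1) p1(3) CF r(3) d10 d1D less_imp_le[OF d20]
                c1 c2 c3 c4 c5 c6 k1[unfolded \<kappa>'_def] k2[unfolded \<kappa>'_def] k3[unfolded \<kappa>'_def]]
            unfolding V_def by blast
          define I0 where "I0 = integral {0..ls + z2 t} (\<lambda>x. (w x t)\<^sup>2)"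
          define I1 where "I1 = integral {0..ls + z2 t} (\<lambda>x. (wx x t)\<^sup>2)"
          define W0 where "W0 = (w 0 t)\<^sup>2"
          define Xn where "Xn = (norm (vector [z1 t, z2 t] :: real^2))\<^sup>2"
          define XP where "XP = vector [z1 t, z2 t] \<bullet> (P *v vector [z1 t, z2 t])"
          have Veq: "V t = d1 / 2 * I0 + 1 / 2 * I1 + \<gamma> / 2 * W0 + d2 * XP"
            unfolding V_def lyapV_def Let_def I0_def I1_def W0_def XP_def by simp
          have nn: "0 \<le> I0" "0 \<le> I1" "0 \<le> W0" "0 \<le> Xn" unfolding I0_def I1_def W0_def Xn_def
            using int_nn by auto
          have XPb: "XP \<le> p1 * Xn" unfolding XP_def Xn_def by (rule p1(2))
          have b1: "c * (d1 / 2 * I0) \<le> (d1 * g / 2) * I0"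
          proof -
            have "c * (d1 / 2 * I0) = c * (d1 * I0 / 2)" by simp
            also have "\<dots> \<le> g * (d1 * I0 / 2)" using cg d10 nn by (intro mult_right_mono) auto
            finally show ?thesis by (simp add: mult_ac)
          qed
          have b2: "c * (1 / 2 * I1) \<le> (g / 2) * I1" using cg nn by (simp add: mult_right_mono)
          have b3: "c * (\<gamma> / 2 * W0) \<le> (g * \<gamma> / 2) * W0"
          proof -
            have "c * (\<gamma> / 2 * W0) = c * (\<gamma> * W0 / 2)" by simp
            also have "\<dots> \<le> g * (\<gamma> * W0 / 2)" using cg \<gamma> nn by (intro mult_right_mono) auto
            finally show ?thesis by (simp add: mult_ac)
          qed
          have b4: "c * (d2 * XP) \<le> (d2 * q / 4) * Xn"
          proof -
            have "c * (d2 * XP) \<le> c * (d2 * (p1 * Xn))" using XPb c0 d20 by (intro mult_left_mono) auto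
            also have "\<dots> = d2 * (c * p1) * Xn" by (simp add: mult_ac)
            also have "\<dots> \<le> d2 * (q / 4) * Xn" using cp d20 nn by (intro mult_right_mono mult_left_mono) auto
            finally show ?thesis by simp
          qed
          have "c * V t = c * (d1 / 2 * I0) + c * (1 / 2 * I1) + c * (\<gamma> / 2 * W0) + c * (d2 * XP)"
            unfolding Veq by (simp add: distrib_left)
          then have "- c * V t \<ge> - (g * \<gamma> / 2) * W0 - (d1 * g / 2) * I0 - (g / 2) * I1 - (d2 * q / 4) * Xn"
            using b1 b2 b3 b4 by simp
          then show ?thesis using Vd unfolding I0_def I1_def W0_def Xn_def by (intro exI[of _ Vd]) auto
        qed
        have cf: "continuous_on {0..} f"
          unfolding f_def by (intro continuous_on_power continuous_on_norm S.X_cont)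
        have R: "\<rho>\<^sup>2 > 0" using \<rho>0 by simp
        have f0: "f 0 < \<rho>\<^sup>2"
        proof -
          have "f 0 \<le> V 0 / (d2 * p0)" by (rule f0le)
          also have "\<dots> < M / (d2 * p0)" using V0M d20 p0 by (simp add: divide_strict_right_mono)
          also have "\<dots> = \<rho>\<^sup>2 / 2" unfolding M_def using d20 p0 by simp
          finally have "f 0 < \<rho>\<^sup>2 / 2" .
          moreover have "0 \<le> f 0" unfolding f_def by simp
          ultimately show ?thesis by linarith
        qed
        have Vdec: "V T \<le> V 0 * exp (- c * T)" if T: "0 \<le> T" and gd: "\<forall>t\<in>{0..T}. f t \<le> \<rho>\<^sup>2" for T
        proof (rule decay_lemma[OF T])
          fix t assume "t \<in> {0..T}"
          then show "\<exists>Vd. (V has_real_derivative Vd) (at t within {0..}) \<and> Vd \<le> - c * V t"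
            using dgood gd by auto
        next
          show "T \<in> {0..T}" using T by simp
        qed
        have V0nn: "0 \<le> V 0"
        proof -
          have "0 \<le> f 0" unfolding f_def by simp
          then have "0 \<le> d2 * p0 * f 0" using d20 p0 by simp
          then show ?thesis using Vlow[of 0] by linarith
        qed
        have boot: "\<forall>t\<ge>0. f t \<le> \<rho>\<^sup>2"
        proof (rule bootstrap[OF cf R f0])
          fix T :: real assume T: "0 \<le> T" and gd: "\<forall>t\<in>{0..T}. f t \<le> \<rho>\<^sup>2"
          have "f T \<le> V T / (d2 * p0)" by (rule f0le)
          also have "\<dots> \<le> V 0 * exp (- c * T) / (d2 * p0)" using Vdec[OF T gd] d20 p0 by (simp add: divide_right_mono)
          also have "\<dots> \<le> V 0 / (d2 * p0)"
          proof -
            have "exp (- c * T) \<le> 1" using c0 T by simp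
            then have "V 0 * exp (- c * T) \<le> V 0" using V0nn by (simp add: mult_left_le)
            then show ?thesis using d20 p0 by (simp add: divide_right_mono)
          qed
          also have "\<dots> < M / (d2 * p0)" using V0M d20 p0 by (simp add: divide_strict_right_mono)
          also have "\<dots> = \<rho>\<^sup>2 / 2" unfolding M_def using d20 p0 by simp
          finally have "f T < \<rho>\<^sup>2 / 2" .
          moreover have "0 \<le> f T" unfolding f_def by simp
          ultimately show "f T < \<rho>\<^sup>2" by linarith
        qed
        fix t :: real assume t: "0 \<le> t"
        have ft: "f t \<le> \<rho>\<^sup>2" using boot t by simp
        have r: "0 < ls + z2 t" "ls + z2 t \<le> lbar" "\<bar>rg * z1 t\<bar> \<le> \<nu>" using region[OF ft] by auto
        have Vt: "V t \<le> V 0 * exp (- c * t)"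
          by (rule Vdec[OF t]) (use boot in auto)
        also have "\<dots> \<le> V 0 * exp (- (\<alpha> / 2) * t)"
        proof -
          have "(\<alpha> / 2) * t \<le> c * t" by (rule mult_right_mono[OF \<alpha>c t])
          then have "exp (- c * t) \<le> exp (- (\<alpha> / 2) * t)" by simp
          then show ?thesis using V0nn by (rule mult_left_mono)
        qed
        finally have "V t \<le> V 0 * exp (- (\<alpha> / 2) * t)" .
        then show "0 < ls + z2 t \<and> ls + z2 t \<le> lbar \<and> \<bar>rg * z1 t\<bar> \<le> vbar \<and>
                 lyapV ls \<gamma> d1 d2 P w wx z1 z2 t \<le> lyapV ls \<gamma> d1 d2 P w wx z1 z2 0 * exp (- (\<alpha> / 2) * t)"
          using r \<nu>le unfolding V_def by auto
      qed
    qed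
  qed
qed


end
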